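(* Let $v\in\mathbb{R}^2$ and let $f\in\mathrm{CPA}_p$ be a $v$-function with $p\ge3$ pieces. Then $f=\sum_{n=1}^{p-2}f^{(n)}$, where each $f^{(n)}\in\mathrm{CPA}_3$ is a $v$-function.
   Context: For $v,u\in\mathbb{R}^2$, $u\ne0$: a line segment $\{v+tu:t\in[0,1]\}$, a ray $\{v+tu:t\ge0\}$ (vertex $v$), a line $\{v+tu:t\in\mathbb{R}\}$. A polygonal arc is a line, or a set homeomorphic to a line which is the union of two rays and finitely many segments, any two disjoint or meeting in a common vertex; a polygonal cycle is a set homeomorphic to a circle which is a finite union of segments, any two disjoint or meeting only in a vertex of both. A polygon is a closed $P\subseteq\mathbb{R}^2$ with connected interior whose boundary is the union of finitely many polygonal arcs and cycles (with chosen edge sets), any two meeting in the empty set or a vertex of both. A continuous $f:\mathbb{R}^2\to\mathbb{R}$ is continuous piecewise affine (CPA) with admissible pieces $\mathcal{P}$ if $\mathcal{P}$ is a finite set of polygons covering $\mathbb{R}^2$, $P\cap Q=\partial P\cap\partial Q$ for distinct pieces, every vertex of a piece is a vertex of every piece containing it, and $f$ is affine on each piece. $\mathrm{CPA}_p$ is the set of CPA functions admitting an admissible set of $p$ pieces. A CPA function is a $v$-function if (for its admissible pieces) $v$ is its only vertex and all its edges are rays. *)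

theory Defs
  imports "HOL-Analysis.Analysis"
begin

type_synonym pt = "real^2"

definition is_segment :: "pt set \<Rightarrow> bool" where
  "is_segment S \<longleftrightarrow> (\<exists>v u. u \<noteq> 0 \<and> S = {v + t *\<^sub>R u | t. 0 \<le> t \<and> t \<le> 1})"

definition is_ray :: "pt set \<Rightarrow> bool" where
  "is_ray S \<longleftrightarrow> (\<exists>v u. u \<noteq> 0 \<and> S = {v + t *\<^sub>R u | t. 0 \<le> t})"

definition is_line :: "pt set \<Rightarrow> bool" where
  "is_line S \<longleftrightarrow> (\<exists>v u. u \<noteq> 0 \<and> S = {v + t *\<^sub>R u | t. True})"

definition edge_vertex :: "pt \<Rightarrow> pt set \<Rightarrow> bool" where
  "edge_vertex w S \<longleftrightarrow> (\<exists>u. u \<noteq> 0 \<and>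
      (S = {w + t *\<^sub>R u | t. 0 \<le> t \<and> t \<le> 1} \<or> S = {w + t *\<^sub>R u | t. 0 \<le> t}))"

definition edges_vertices :: "pt set set \<Rightarrow> pt set" where
  "edges_vertices E = {w. \<exists>e\<in>E. edge_vertex w e}"

definition edges_meet_ok :: "pt set \<Rightarrow> pt set \<Rightarrow> bool" where
  "edges_meet_ok A B \<longleftrightarrow> A \<inter> B = {} \<or>
     (\<exists>w. A \<inter> B = {w} \<and> edge_vertex w A \<and> edge_vertex w B)"

definition polygonal_arc :: "pt set set \<Rightarrow> bool" where
  "polygonal_arc E \<longleftrightarrow> finite E \<and>
     ((\<exists>L. is_line L \<and> E = {L}) \<or>
      (\<Union>E homeomorphic (UNIV :: real set) \<and>
       (\<forall>e\<in>E. is_ray e \<or> is_segment e) \<and>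
       card {e\<in>E. is_ray e} = 2 \<and>
       pairwise edges_meet_ok E))"

definition polygonal_cycle :: "pt set set \<Rightarrow> bool" where
  "polygonal_cycle E \<longleftrightarrow> finite E \<and> (\<forall>e\<in>E. is_segment e) \<and>
     \<Union>E homeomorphic sphere (0 :: pt) 1 \<and> pairwise edges_meet_ok E"

text \<open>A polygon P together with its chosen boundary structure Cs
  (a finite set of polygonal arcs and cycles, each given by its edge set).\<close>
definition polygon :: "pt set \<Rightarrow> pt set set set \<Rightarrow> bool" where
  "polygon P Cs \<longleftrightarrow> closed P \<and> interior P \<noteq> {} \<and> connected (interior P) \<and>
     finite Cs \<and> (\<forall>C\<in>Cs. polygonal_arc C \<or> polygonal_cycle C) \<and>
     frontier P = \<Union>(\<Union>Cs) \<and>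
     (\<forall>C\<in>Cs. \<forall>D\<in>Cs. C \<noteq> D \<longrightarrow>
        \<Union>C \<inter> \<Union>D = {} \<or>
        (\<exists>w. \<Union>C \<inter> \<Union>D = {w} \<and> w \<in> edges_vertices C \<and> w \<in> edges_vertices D))"

type_synonym piece = "pt set \<times> pt set set set"

definition piece_edges :: "piece \<Rightarrow> pt set set" where
  "piece_edges A = \<Union>(snd A)"

definition piece_vertices :: "piece \<Rightarrow> pt set" where
  "piece_vertices A = edges_vertices (piece_edges A)"

definition CPA_pieces :: "(pt \<Rightarrow> real) \<Rightarrow> piece set \<Rightarrow> bool" where
  "CPA_pieces f \<P> \<longleftrightarrow> continuous_on UNIV f \<and> finite \<P> \<and>
     (\<forall>A\<in>\<P>. polygon (fst A) (snd A)) \<and>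
     \<Union>(fst ` \<P>) = UNIV \<and>
     (\<forall>A\<in>\<P>. \<forall>B\<in>\<P>. A \<noteq> B \<longrightarrow> fst A \<inter> fst B = frontier (fst A) \<inter> frontier (fst B)) \<and>
     (\<forall>A\<in>\<P>. \<forall>B\<in>\<P>. \<forall>w\<in>piece_vertices A. w \<in> fst B \<longrightarrow> w \<in> piece_vertices B) \<and>
     (\<forall>A\<in>\<P>. \<exists>(a::pt) (c::real). \<forall>x\<in>fst A. f x = a \<bullet> x + c)"

definition CPA :: "nat \<Rightarrow> (pt \<Rightarrow> real) set" where
  "CPA p = {f. \<exists>\<P>. CPA_pieces f \<P> \<and> card \<P> = p}"

definition v_function :: "pt \<Rightarrow> piece set \<Rightarrow> bool" where
  "v_function v \<P> \<longleftrightarrow> (\<Union>A\<in>\<P>. piece_vertices A) = {v} \<and>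
     (\<forall>A\<in>\<P>. \<forall>e\<in>piece_edges A. is_ray e)"

end

theory Submission
  imports Defs
begin

definition ee :: "real \<Rightarrow> real^2" where "ee t = vector [cos t, sin t]"

lemma ee_comp[simp]: "ee t $ 1 = cos t" "ee t $ 2 = sin t"
  by (simp_all add: ee_def)

lemma inner2: "(x::real^2) \<bullet> y = x$1*y$1 + x$2*y$2"
  by (simp add: inner_vec_def sum_2)

lemma norm_ee[simp]: "norm (ee t) = 1"
  by (simp add: norm_eq_sqrt_inner inner2 flip: power2_eq_square)

lemma ee_nz[simp]: "ee t \<noteq> 0"
  using norm_ee[of t] by (metis norm_zero zero_neq_one)

lemma vec2_eq: "(x::real^2) = y \<longleftrightarrow> x$1 = y$1 \<and> x$2 = y$2"
  by (simp add: vec_eq_iff forall_2)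

lemma ee_periodic: "ee (t + 2*pi * of_int m) = ee t"
proof -
  have "cos (t + 2*pi * of_int m) = cos t" "sin (t + 2*pi * of_int m) = sin t"
    by (simp_all add: cos_add sin_add)
  then show ?thesis by (simp add: vec2_eq)
qed

lemma ee_2pi[simp]: "ee (t + 2*pi) = ee t"
  using ee_periodic[of t 1] by simp

lemma ee_eq: assumes "ee s = ee t" shows "\<exists>m::int. s = t + 2*pi*m"
proof -
  have "cos s = cos t" "sin s = sin t" using assms by (metis ee_comp)+
  then have "cos (s - t) = 1" by (simp add: cos_diff flip: power2_eq_square)
  then obtain n::int where "s - t = of_int n * 2 * pi" using cos_one_2pi_int by auto
  then show ?thesis by (intro exI[of _ n]) (simp add: algebra_simps)
qed

lemma polar: assumes "y \<noteq> (0::real^2)" shows "\<exists>t. a \<le> t \<and> t < a + 2*pi \<and> y = norm y *\<^sub>R ee t"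
proof -
  define u where "u = y /\<^sub>R norm y"
  have nu: "norm u = 1" using assms by (simp add: u_def)
  have "(u$1)\<^sup>2 + (u$2)\<^sup>2 = 1" using nu by (simp add: norm_eq_sqrt_inner inner2 power2_eq_square)
  then obtain t0 where t0: "0 \<le> t0" "t0 < 2*pi" "u$1 = cos t0" "u$2 = sin t0"
    using sincos_total_2pi by blast
  have ue: "u = ee t0" using t0 by (simp add: vec2_eq)
  define n where "n = \<lceil>(a - t0)/(2*pi)\<rceil>"
  have "(a - t0)/(2*pi) \<le> n" "n < (a - t0)/(2*pi) + 1" unfolding n_def by linarith+
  then have "a - t0 \<le> 2*pi*n" "2*pi*n < a - t0 + 2*pi"
    using pi_gt_zero by (simp_all add: field_simps)
  moreover have "y = norm y *\<^sub>R ee (t0 + 2*pi*n)"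
  proof -
    have "norm y *\<^sub>R u = y" using assms by (simp add: u_def)
    then show ?thesis using ue ee_periodic by simp
  qed
  ultimately show ?thesis by (intro exI[of _ "t0 + 2*pi*n"]) auto
qed

lemma int_window:
  fixes m :: int
  assumes "a \<le> t" "t < a + 2*pi" "a \<le> c" "c \<le> t + 2*pi*m" "t + 2*pi*m \<le> d" "d < a + 4*pi"
  shows "m = 0 \<or> m = 1"
proof -
  have "2*pi * of_int m > - 2*pi" using assms by linarith
  then have "2*pi*(of_int m + 1) > 0" by (simp add: algebra_simps)
  then have "of_int m + 1 > (0::real)" using pi_gt_zero by (simp add: zero_less_mult_iff)
  then have "m \<ge> 0" by linarith
  have "2*pi * of_int m < 4*pi" using assms by linarith
  then have "2*pi*(2 - of_int m) > 0" by (simp add: algebra_simps)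
  then have "2 - of_int m > (0::real)" using pi_gt_zero by (simp add: zero_less_mult_iff)
  then have "m \<le> 1" by linarith
  with \<open>m \<ge> 0\<close> show ?thesis by linarith
qed

definition Sec :: "real^2 \<Rightarrow> real \<Rightarrow> real \<Rightarrow> (real^2) set" where
  "Sec v a b = {v + r *\<^sub>R ee t | r t. 0 \<le> r \<and> a \<le> t \<and> t \<le> b}"
definition OSec :: "real^2 \<Rightarrow> real \<Rightarrow> real \<Rightarrow> (real^2) set" where
  "OSec v a b = {v + r *\<^sub>R ee t | r t. 0 < r \<and> a < t \<and> t < b}"
definition ray :: "real^2 \<Rightarrow> real \<Rightarrow> (real^2) set" where
  "ray v a = {v + r *\<^sub>R ee a | r. 0 \<le> r}"

lemma scaled_ee_eq:
  assumes "y = r *\<^sub>R ee s" "y = norm y *\<^sub>R ee t" "y \<noteq> 0" "0 \<le> r"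
  shows "r = norm y" "ee s = ee t"
proof -
  show r: "r = norm y" using assms(1,4) by simp
  have "r > 0" using assms(1,3,4) by (metis less_eq_real_def scale_zero_left)
  have "r *\<^sub>R ee s = r *\<^sub>R ee t" using assms(1,2) r by metis
  then show "ee s = ee t" using \<open>r > 0\<close> by simp
qed

lemma memb_Sec:
  assumes "y \<noteq> 0" "y = norm y *\<^sub>R ee t"
  shows "v + y \<in> Sec v c d \<longleftrightarrow> (\<exists>m::int. c \<le> t + 2*pi*m \<and> t + 2*pi*m \<le> d)"
proof
  assume "v + y \<in> Sec v c d"
  then obtain r s where rs: "y = r *\<^sub>R ee s" "0 \<le> r" "c \<le> s" "s \<le> d" unfolding Sec_def by auto
  then have "ee s = ee t" using scaled_ee_eq(2)[OF rs(1) assms(2) assms(1) rs(2)] by simp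
  then obtain m::int where "s = t + 2*pi*m" using ee_eq by blast
  then show "\<exists>m::int. c \<le> t + 2*pi*m \<and> t + 2*pi*m \<le> d" using rs by auto
next
  assume "\<exists>m::int. c \<le> t + 2*pi*m \<and> t + 2*pi*m \<le> d"
  then obtain m::int where m: "c \<le> t + 2*pi*m" "t + 2*pi*m \<le> d" by blast
  have "y = norm y *\<^sub>R ee (t + 2*pi*m)" unfolding ee_periodic by (rule assms(2))
  then show "v + y \<in> Sec v c d" unfolding Sec_def using m by force
qed

lemma memb_OSec:
  assumes "y \<noteq> 0" "y = norm y *\<^sub>R ee t"
  shows "v + y \<in> OSec v c d \<longleftrightarrow> (\<exists>m::int. c < t + 2*pi*m \<and> t + 2*pi*m < d)"
proof
  assume "v + y \<in> OSec v c d"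
  then obtain r s where rs: "y = r *\<^sub>R ee s" "0 < r" "c < s" "s < d" unfolding OSec_def by auto
  then have "ee s = ee t" using scaled_ee_eq(2)[OF rs(1) assms(2) assms(1)] rs(2) by simp
  then obtain m::int where "s = t + 2*pi*m" using ee_eq by blast
  then show "\<exists>m::int. c < t + 2*pi*m \<and> t + 2*pi*m < d" using rs by auto
next
  assume "\<exists>m::int. c < t + 2*pi*m \<and> t + 2*pi*m < d"
  then obtain m::int where m: "c < t + 2*pi*m" "t + 2*pi*m < d" by blast
  have "y = norm y *\<^sub>R ee (t + 2*pi*m)" unfolding ee_periodic by (rule assms(2))
  moreover have "norm y > 0" using assms by simp
  ultimately show "v + y \<in> OSec v c d" unfolding OSec_def using m by force
qed

lemma ray_Sec: "ray v a = Sec v a a"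
  unfolding ray_def Sec_def by auto

lemma memb_Sec_w:
  assumes "y \<noteq> 0" "y = norm y *\<^sub>R ee t" "a \<le> t" "t < a + 2*pi" "a \<le> c" "d < a + 4*pi"
  shows "v + y \<in> Sec v c d \<longleftrightarrow> (c \<le> t \<and> t \<le> d) \<or> (c \<le> t + 2*pi \<and> t + 2*pi \<le> d)"
proof -
  have "(\<exists>m::int. c \<le> t + 2*pi*m \<and> t + 2*pi*m \<le> d) \<longleftrightarrow> (c \<le> t \<and> t \<le> d) \<or> (c \<le> t + 2*pi \<and> t + 2*pi \<le> d)"
  proof
    assume "\<exists>m::int. c \<le> t + 2*pi*m \<and> t + 2*pi*m \<le> d"
    then obtain m::int where m: "c \<le> t + 2*pi*m" "t + 2*pi*m \<le> d" by blast
    then have "m = 0 \<or> m = 1" using int_window assms by blast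
    then show "(c \<le> t \<and> t \<le> d) \<or> (c \<le> t + 2*pi \<and> t + 2*pi \<le> d)" using m by auto
  next
    assume "(c \<le> t \<and> t \<le> d) \<or> (c \<le> t + 2*pi \<and> t + 2*pi \<le> d)"
    then show "\<exists>m::int. c \<le> t + 2*pi*m \<and> t + 2*pi*m \<le> d"
    proof
      assume "c \<le> t \<and> t \<le> d" then show ?thesis by (intro exI[of _ 0]) simp
    next
      assume "c \<le> t + 2*pi \<and> t + 2*pi \<le> d" then show ?thesis by (intro exI[of _ 1]) simp
    qed
  qed
  then show ?thesis using memb_Sec[OF assms(1,2)] by simp
qed

lemma memb_OSec_w:
  assumes "y \<noteq> 0" "y = norm y *\<^sub>R ee t" "a \<le> t" "t < a + 2*pi" "a \<le> c" "d < a + 4*pi"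
  shows "v + y \<in> OSec v c d \<longleftrightarrow> (c < t \<and> t < d) \<or> (c < t + 2*pi \<and> t + 2*pi < d)"
proof -
  have "(\<exists>m::int. c < t + 2*pi*m \<and> t + 2*pi*m < d) \<longleftrightarrow> (c < t \<and> t < d) \<or> (c < t + 2*pi \<and> t + 2*pi < d)"
  proof
    assume "\<exists>m::int. c < t + 2*pi*m \<and> t + 2*pi*m < d"
    then obtain m::int where m: "c < t + 2*pi*m" "t + 2*pi*m < d" by blast
    then have "m = 0 \<or> m = 1" using int_window[of a t c m d] assms by auto
    then show "(c < t \<and> t < d) \<or> (c < t + 2*pi \<and> t + 2*pi < d)" using m by auto
  next
    assume "(c < t \<and> t < d) \<or> (c < t + 2*pi \<and> t + 2*pi < d)"
    then show "\<exists>m::int. c < t + 2*pi*m \<and> t + 2*pi*m < d"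
    proof
      assume "c < t \<and> t < d" then show ?thesis by (intro exI[of _ 0]) simp
    next
      assume "c < t + 2*pi \<and> t + 2*pi < d" then show ?thesis by (intro exI[of _ 1]) simp
    qed
  qed
  then show ?thesis using memb_OSec[OF assms(1,2)] by simp
qed

lemma v_in_Sec: "a \<le> b \<Longrightarrow> v \<in> Sec v a b"
  unfolding Sec_def by force

lemma v_notin_OSec: "v \<notin> OSec v a b"
  unfolding OSec_def by auto

lemma ee_alt: "ee t = cos t *\<^sub>R axis 1 1 + sin t *\<^sub>R axis 2 1"
  by (simp add: vec2_eq axis_def)

lemma cont_ee: "continuous_on S ee"
  unfolding ee_alt[abs_def] by (intro continuous_intros)

definition PP :: "real^2 \<Rightarrow> real \<times> real \<Rightarrow> real^2" where
  "PP v z = v + fst z *\<^sub>R ee (snd z)"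

lemma cont_PP: "continuous_on S (PP v)"
proof -
  have "continuous_on S (ee o (\<lambda>z. snd z))"
    by (rule continuous_on_compose[OF continuous_on_snd[OF continuous_on_id] cont_ee])
  then have "continuous_on S (\<lambda>z. ee (snd z))" by (simp only: o_def)
  then have "continuous_on S (\<lambda>z. fst z *\<^sub>R ee (snd z))"
    by (rule continuous_on_scaleR[OF continuous_on_fst[OF continuous_on_id]])
  then show ?thesis unfolding PP_def[abs_def]
    by (rule continuous_on_add[OF continuous_on_const])
qed

lemma Sec_img: "Sec v a b = PP v ` ({0..} \<times> {a..b})"
proof (rule set_eqI, rule iffI)
  fix x assume "x \<in> Sec v a b"
  then obtain r t where "x = v + r *\<^sub>R ee t" "0 \<le> r" "a \<le> t" "t \<le> b" unfolding Sec_def by blast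
  then show "x \<in> PP v ` ({0..} \<times> {a..b})" unfolding PP_def by (intro image_eqI[of _ _ "(r,t)"]) auto
next
  fix x assume "x \<in> PP v ` ({0..} \<times> {a..b})"
  then obtain r t where rt: "(r,t) \<in> {0..} \<times> {a..b}" "x = PP v (r,t)" by blast
  then have "0 \<le> r" "a \<le> t" "t \<le> b" by auto
  then show "x \<in> Sec v a b" using rt(2) unfolding Sec_def PP_def by auto
qed

lemma OSec_img: "OSec v a b = PP v ` ({0<..} \<times> {a<..<b})"
proof (rule set_eqI, rule iffI)
  fix x assume "x \<in> OSec v a b"
  then obtain r t where "x = v + r *\<^sub>R ee t" "0 < r" "a < t" "t < b" unfolding OSec_def by blast
  then show "x \<in> PP v ` ({0<..} \<times> {a<..<b})" unfolding PP_def by (intro image_eqI[of _ _ "(r,t)"]) auto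
next
  fix x assume "x \<in> PP v ` ({0<..} \<times> {a<..<b})"
  then obtain r t where rt: "(r,t) \<in> {0<..} \<times> {a<..<b}" "x = PP v (r,t)" by blast
  then have "0 < r" "a < t" "t < b" by auto
  then show "x \<in> OSec v a b" using rt(2) unfolding OSec_def PP_def by auto
qed

lemma split_pt: fixes x v :: "real^2" obtains y where "x = v + y" "y = x - v"
proof -
  have "x = v + (x - v)" by (simp add: algebra_simps)
  then show ?thesis using that by blast
qed

lemma Sec_periodic: "Sec v (a + 2*pi) (b + 2*pi) = Sec v a b"
proof (rule set_eqI)
  fix x
  obtain y where y: "x = v + y" using split_pt by blast
  show "x \<in> Sec v (a + 2*pi) (b + 2*pi) \<longleftrightarrow> x \<in> Sec v a b"
  proof (cases "y = 0")
    case True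
    then show ?thesis using y unfolding Sec_def by auto
  next
    case False
    then obtain t where t: "y = norm y *\<^sub>R ee t" using polar by blast
    have "(\<exists>m::int. a + 2*pi \<le> t + 2*pi*m \<and> t + 2*pi*m \<le> b + 2*pi) \<longleftrightarrow>
          (\<exists>m::int. a \<le> t + 2*pi*m \<and> t + 2*pi*m \<le> b)"
    proof
      assume "\<exists>m::int. a + 2*pi \<le> t + 2*pi*m \<and> t + 2*pi*m \<le> b + 2*pi"
      then obtain m::int where "a + 2*pi \<le> t + 2*pi*m" "t + 2*pi*m \<le> b + 2*pi" by blast
      then show "\<exists>m::int. a \<le> t + 2*pi*m \<and> t + 2*pi*m \<le> b"
        by (intro exI[of _ "m - 1"]) (simp add: algebra_simps)
    next
      assume "\<exists>m::int. a \<le> t + 2*pi*m \<and> t + 2*pi*m \<le> b"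
      then obtain m::int where "a \<le> t + 2*pi*m" "t + 2*pi*m \<le> b" by blast
      then show "\<exists>m::int. a + 2*pi \<le> t + 2*pi*m \<and> t + 2*pi*m \<le> b + 2*pi"
        by (intro exI[of _ "m + 1"]) (simp add: algebra_simps)
    qed
    then show ?thesis using memb_Sec[OF False t] y by simp
  qed
qed

lemma OSec_periodic: "OSec v (a + 2*pi) (b + 2*pi) = OSec v a b"
proof (rule set_eqI)
  fix x
  obtain y where y: "x = v + y" using split_pt by blast
  show "x \<in> OSec v (a + 2*pi) (b + 2*pi) \<longleftrightarrow> x \<in> OSec v a b"
  proof (cases "y = 0")
    case True
    then show ?thesis using y v_notin_OSec by auto
  next
    case False
    then obtain t where t: "y = norm y *\<^sub>R ee t" using polar by blast
    have "(\<exists>m::int. a + 2*pi < t + 2*pi*m \<and> t + 2*pi*m < b + 2*pi) \<longleftrightarrow>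
          (\<exists>m::int. a < t + 2*pi*m \<and> t + 2*pi*m < b)"
    proof
      assume "\<exists>m::int. a + 2*pi < t + 2*pi*m \<and> t + 2*pi*m < b + 2*pi"
      then obtain m::int where "a + 2*pi < t + 2*pi*m" "t + 2*pi*m < b + 2*pi" by blast
      then show "\<exists>m::int. a < t + 2*pi*m \<and> t + 2*pi*m < b"
        by (intro exI[of _ "m - 1"]) (simp add: algebra_simps)
    next
      assume "\<exists>m::int. a < t + 2*pi*m \<and> t + 2*pi*m < b"
      then obtain m::int where "a < t + 2*pi*m" "t + 2*pi*m < b" by blast
      then show "\<exists>m::int. a + 2*pi < t + 2*pi*m \<and> t + 2*pi*m < b + 2*pi"
        by (intro exI[of _ "m + 1"]) (simp add: algebra_simps)
    qed
    then show ?thesis using memb_OSec[OF False t] y by simp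
  qed
qed

lemma closed_Sec: "closed (Sec v a b)"
proof (cases "a \<le> b")
  case True
  have c: "compact (ee ` {a..b})" by (intro compact_continuous_image cont_ee compact_Icc)
  have z: "0 \<notin> ee ` {a..b}" by auto
  have "closed (conic hull (ee ` {a..b}))" using closed_conic_hull c z by blast
  then have "closed ((+) v ` (conic hull (ee ` {a..b})))" by (rule closed_translation)
  moreover have "(+) v ` (conic hull (ee ` {a..b})) = Sec v a b"
  proof (rule set_eqI, rule iffI)
    fix x assume "x \<in> (+) v ` (conic hull (ee ` {a..b}))"
    then obtain c s where "x = v + c *\<^sub>R ee s" "0 \<le> c" "s \<in> {a..b}"
      unfolding conic_hull_explicit by blast
    then show "x \<in> Sec v a b" unfolding Sec_def by auto
  next
    fix x assume "x \<in> Sec v a b"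
    then obtain r t where "x = v + r *\<^sub>R ee t" "0 \<le> r" "t \<in> {a..b}" unfolding Sec_def by auto
    then show "x \<in> (+) v ` (conic hull (ee ` {a..b}))"
      unfolding conic_hull_explicit by blast
  qed
  ultimately show ?thesis by simp
next
  case False
  then have "Sec v a b = {}" unfolding Sec_def by auto
  then show ?thesis by simp
qed

lemma compl_Sec:
  assumes "a \<le> b" "b < a + 2*pi"
  shows "- Sec v a b = OSec v b (a + 2*pi)"
proof (rule set_eqI)
  fix x
  obtain y where y: "x = v + y" using split_pt by blast
  show "x \<in> - Sec v a b \<longleftrightarrow> x \<in> OSec v b (a + 2*pi)"
  proof (cases "y = 0")
    case True
    then show ?thesis using y v_notin_OSec v_in_Sec assms by auto
  next
    case False
    then obtain t where t: "y = norm y *\<^sub>R ee t" "a \<le> t" "t < a + 2*pi" using polar by blast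
    have 1: "x \<in> Sec v a b \<longleftrightarrow> (a \<le> t \<and> t \<le> b) \<or> (a \<le> t + 2*pi \<and> t + 2*pi \<le> b)"
      using memb_Sec_w[OF False t(1) t(2) t(3), of a b v] y assms by (simp add: pi_gt_zero)
    have 2: "x \<in> OSec v b (a + 2*pi) \<longleftrightarrow> (b < t \<and> t < a + 2*pi) \<or> (b < t + 2*pi \<and> t + 2*pi < a + 2*pi)"
      using memb_OSec_w[OF False t(1) t(2) t(3), of b "a + 2*pi" v] y assms by (simp add: pi_gt_zero)
    show ?thesis using 1 2 t assms by auto
  qed
qed

lemma open_OSec:
  assumes "c < d" "d \<le> c + 2*pi"
  shows "open (OSec v c d)"
proof -
  have "OSec v c d = OSec v (c + 2*pi) (d + 2*pi)" by (simp add: OSec_periodic)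
  also have "\<dots> = - Sec v d (c + 2*pi)" using compl_Sec[of d "c + 2*pi" v] assms by simp
  finally show ?thesis using closed_Sec by (simp add: open_Compl)
qed

lemma OSec_sub: "OSec v a b \<subseteq> Sec v a b"
  unfolding OSec_def Sec_def by force

lemma closure_OSec:
  assumes "a < b"
  shows "closure (OSec v a b) = Sec v a b"
proof
  show "closure (OSec v a b) \<subseteq> Sec v a b"
    by (intro closure_minimal OSec_sub closed_Sec)
  have cl: "closure ({0<..} \<times> {a<..<b}) = {0::real..} \<times> {a..b}"
    using assms by (simp add: closure_Times)
  have "PP v ` closure ({0<..} \<times> {a<..<b}) \<subseteq> closure (OSec v a b)"
    by (rule image_closure_subset) (auto simp: cont_PP OSec_img intro: closure_subset[THEN subsetD])
  then show "Sec v a b \<subseteq> closure (OSec v a b)" using cl by (simp add: Sec_img)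
qed

lemma interior_Sec:
  assumes "a < b" "b < a + 2*pi"
  shows "interior (Sec v a b) = OSec v a b"
proof -
  have "interior (Sec v a b) = - closure (- Sec v a b)"
    by (simp add: interior_closure)
  also have "- Sec v a b = OSec v b (a + 2*pi)" using compl_Sec assms by simp
  also have "closure \<dots> = Sec v b (a + 2*pi)" using closure_OSec assms by simp
  also have "- \<dots> = OSec v (a + 2*pi) (b + 2*pi)" using compl_Sec[of b "a + 2*pi" v] assms by simp
  also have "\<dots> = OSec v a b" by (simp add: OSec_periodic)
  finally show ?thesis .
qed

lemma connected_OSec: "connected (OSec v a b)"
proof -
  have "connected ({0::real<..} \<times> {a<..<b})"
    by (intro connected_Times) (auto intro: convex_connected)
  then show ?thesis unfolding OSec_img by (intro connected_continuous_image cont_PP)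
qed

lemma OSec_ne: "a < b \<Longrightarrow> v + ee ((a+b)/2) \<in> OSec v a b"
  unfolding OSec_def by (rule CollectI, rule exI[of _ 1], rule exI[of _ "(a+b)/2"]) auto

lemma frontier_Sec:
  assumes "a < b" "b < a + 2*pi"
  shows "frontier (Sec v a b) = ray v a \<union> ray v b"
proof -
  have "frontier (Sec v a b) = Sec v a b - OSec v a b"
    unfolding frontier_def using interior_Sec[OF assms] closed_Sec by (simp add: closure_closed)
  also have "\<dots> = ray v a \<union> ray v b"
  proof (rule set_eqI)
    fix x
    obtain y where y: "x = v + y" using split_pt by blast
    show "x \<in> Sec v a b - OSec v a b \<longleftrightarrow> x \<in> ray v a \<union> ray v b"
    proof (cases "y = 0")
      case True
      then show ?thesis using y v_notin_OSec v_in_Sec assms unfolding ray_Sec by auto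
    next
      case False
      then obtain t where t: "y = norm y *\<^sub>R ee t" "a \<le> t" "t < a + 2*pi" using polar by blast
      have 1: "x \<in> Sec v a b \<longleftrightarrow> (a \<le> t \<and> t \<le> b) \<or> (a \<le> t + 2*pi \<and> t + 2*pi \<le> b)"
        using memb_Sec_w[OF False t(1) t(2) t(3), of a b v] y assms by (simp add: pi_gt_zero)
      have 2: "x \<in> OSec v a b \<longleftrightarrow> (a < t \<and> t < b) \<or> (a < t + 2*pi \<and> t + 2*pi < b)"
        using memb_OSec_w[OF False t(1) t(2) t(3), of a b v] y assms by (simp add: pi_gt_zero)
      have 3: "x \<in> Sec v a a \<longleftrightarrow> (a \<le> t \<and> t \<le> a) \<or> (a \<le> t + 2*pi \<and> t + 2*pi \<le> a)"
        using memb_Sec_w[OF False t(1) t(2) t(3), of a a v] y assms by (simp add: pi_gt_zero)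
      have 4: "x \<in> Sec v b b \<longleftrightarrow> (b \<le> t \<and> t \<le> b) \<or> (b \<le> t + 2*pi \<and> t + 2*pi \<le> b)"
        using memb_Sec_w[OF False t(1) t(2) t(3), of b b v] y assms by (simp add: pi_gt_zero)
      show ?thesis using 1 2 3 4 t assms unfolding ray_Sec by auto
    qed
  qed
  finally show ?thesis .
qed

lemma ee_inner[simp]: "ee t \<bullet> ee t = 1"
  by (simp add: inner2 flip: power2_eq_square)

lemma ee_neq: assumes "a < b" "b < a + 2*pi" shows "ee a \<noteq> ee b"
proof
  assume "ee a = ee b"
  then obtain m::int where m: "b = a + 2*pi*m" using ee_eq[of b a] by metis
  then have "0 < 2*pi*m" "2*pi*m < 2*pi*1" using assms by linarith+
  then have "0 < m" "m < 1" using pi_gt_zero by (simp_all add: zero_less_mult_iff mult_less_cancel_left)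
  then show False by linarith
qed

lemma ray_2pi[simp]: "ray v (a + 2*pi) = ray v a"
  unfolding ray_def by simp

lemma is_ray_ray: "is_ray (ray v a)"
  unfolding is_ray_def ray_def by (intro exI[of _ v] exI[of _ "ee a"]) simp

lemma closed_ray: "closed (ray v a)"
  unfolding ray_Sec by (rule closed_Sec)

lemma in_rayI: "0 \<le> r \<Longrightarrow> v + r *\<^sub>R ee a \<in> ray v a"
  unfolding ray_def by blast

lemma v_in_ray[simp]: "v \<in> ray v a"
  unfolding ray_def by (rule CollectI, rule exI[of _ 0]) simp

lemma ray_scaled_eq:
  assumes "r *\<^sub>R ee a = s *\<^sub>R ee b" "0 \<le> r" "0 \<le> s" "ee a \<noteq> ee b"
  shows "r = 0 \<and> s = 0"
proof -
  have "norm (r *\<^sub>R ee a) = norm (s *\<^sub>R ee b)" using assms(1) by simp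
  then have rs: "r = s" using assms(2,3) by simp
  show ?thesis
  proof (cases "r = 0")
    case True then show ?thesis using rs by simp
  next
    case False
    then have "ee a = ee b" using assms(1) rs by simp
    then show ?thesis using assms(4) by simp
  qed
qed

lemma ray_inter: assumes "ee a \<noteq> ee b" shows "ray v a \<inter> ray v b = {v}"
proof (rule set_eqI, rule iffI)
  fix x assume "x \<in> ray v a \<inter> ray v b"
  then obtain r s where "x = v + r *\<^sub>R ee a" "0 \<le> r" "x = v + s *\<^sub>R ee b" "0 \<le> s"
    unfolding ray_def by blast
  then have "r *\<^sub>R ee a = s *\<^sub>R ee b" "0 \<le> r" "0 \<le> s" by simp_all
  then have "r = 0" using ray_scaled_eq assms by blast
  then show "x \<in> {v}" using \<open>x = v + r *\<^sub>R ee a\<close> by simp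
qed simp

lemma ray_neq: assumes "ee a \<noteq> ee b" shows "ray v a \<noteq> ray v b"
proof
  assume "ray v a = ray v b"
  have "v + 1 *\<^sub>R ee a \<in> ray v a" unfolding ray_def by (rule CollectI, rule exI[of _ 1]) simp
  then have "v + 1 *\<^sub>R ee a \<in> ray v a \<inter> ray v b" using \<open>ray v a = ray v b\<close> by simp
  then show False using ray_inter[OF assms, of v] by simp
qed

lemma edge_vertex_ray: "edge_vertex w (ray v a) \<longleftrightarrow> w = v"
proof
  assume "w = v"
  then show "edge_vertex w (ray v a)"
    unfolding edge_vertex_def ray_def by (intro exI[of _ "ee a"]) simp
next
  assume "edge_vertex w (ray v a)"
  then obtain u where u: "u \<noteq> 0"
    "ray v a = {w + t *\<^sub>R u | t. 0 \<le> t \<and> t \<le> 1} \<or> ray v a = {w + t *\<^sub>R u | t. 0 \<le> t}"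
    unfolding edge_vertex_def by blast
  show "w = v"
  proof (cases "ray v a = {w + t *\<^sub>R u | t. 0 \<le> t \<and> t \<le> 1}")
    case True
    define R where "R = norm w + norm u + norm v + 1"
    have "v + R *\<^sub>R ee a \<in> ray v a" unfolding ray_def R_def
      by (rule CollectI, rule exI[of _ R]) (simp add: R_def)
    then obtain t where t: "v + R *\<^sub>R ee a = w + t *\<^sub>R u" "0 \<le> t" "t \<le> 1" using True by blast
    have "norm (w + t *\<^sub>R u) \<le> norm w + norm u"
      using norm_triangle_ineq[of w "t *\<^sub>R u"] t(2,3)
      by (smt (verit) mult_left_le_one_le norm_ge_zero norm_scaleR)
    moreover have "norm (v + R *\<^sub>R ee a) \<ge> R - norm v"
    proof -
      have "norm ((v + R *\<^sub>R ee a) - v) \<le> norm (v + R *\<^sub>R ee a) + norm v" by (rule norm_triangle_ineq4)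
      moreover have "R \<ge> 0" unfolding R_def by simp
      ultimately show ?thesis by simp
    qed
    ultimately show ?thesis using t(1) unfolding R_def by simp
  next
    case False
    then have eq: "ray v a = {w + t *\<^sub>R u | t. 0 \<le> t}" using u by blast
    have "w \<in> ray v a" unfolding eq by (rule CollectI, rule exI[of _ 0]) simp
    then obtain r0 where r0: "w = v + r0 *\<^sub>R ee a" "0 \<le> r0" unfolding ray_def by blast
    have "v \<in> ray v a" by simp
    then obtain t0 where t0: "v = w + t0 *\<^sub>R u" "0 \<le> t0" unfolding eq by blast
    show "w = v"
    proof (rule ccontr)
      assume "w \<noteq> v"
      have "r0 \<noteq> 0"
      proof
        assume "r0 = 0" then have "w = v" using r0(1) by simp
        then show False using \<open>w \<noteq> v\<close> by simp
      qed
      have "t0 \<noteq> 0"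
      proof
        assume "t0 = 0" then have "v = w" using t0(1) by simp
        then show False using \<open>w \<noteq> v\<close> by simp
      qed
      have r0p: "r0 > 0" using r0(2) \<open>r0 \<noteq> 0\<close> by simp
      have t0p: "t0 > 0" using t0(2) \<open>t0 \<noteq> 0\<close> by simp
      have e1: "v - w = t0 *\<^sub>R u" using t0(1) by simp
      have e2: "w - v = r0 *\<^sub>R ee a" using r0(1) by simp
      have tu: "t0 *\<^sub>R u = - (r0 *\<^sub>R ee a)" using e1 e2 by (metis minus_diff_eq)
      have "u = (1/t0) *\<^sub>R (t0 *\<^sub>R u)" using t0p by simp
      also have "\<dots> = - ((r0 / t0) *\<^sub>R ee a)" unfolding tu by simp
      finally have ue: "u = - ((r0 / t0) *\<^sub>R ee a)" .
      have "w + (2*t0) *\<^sub>R u \<in> ray v a" unfolding eq by (rule CollectI, rule exI[of _ "2*t0"]) (simp add: t0p less_imp_le)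
      then obtain r where r: "w + (2*t0) *\<^sub>R u = v + r *\<^sub>R ee a" "0 \<le> r" unfolding ray_def by blast
      have c: "(2*t0) * (r0/t0) = 2*r0" using t0p by simp
      have d: "(2*t0) *\<^sub>R u = - ((2*r0) *\<^sub>R ee a)" unfolding ue scaleR_minus_right scaleR_scaleR c ..
      have "w + (2*t0) *\<^sub>R u = v + (- r0) *\<^sub>R ee a"
        unfolding d r0(1) by (simp add: vec2_eq algebra_simps)
      then have "(- r0) *\<^sub>R ee a = r *\<^sub>R ee a" using r(1) by simp
      then have "- r0 = r" using scaleR_cancel_right[of "- r0" "ee a" r] by simp
      then show False using r0p r(2) by simp
    qed
  qed
qed

lemma edges_vertices_rays: "edges_vertices {ray v a, ray v b} = {v}"
  unfolding edges_vertices_def using edge_vertex_ray by auto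

lemma homeo_rays:
  assumes "ee a \<noteq> ee b"
  shows "ray v a \<union> ray v b homeomorphic (UNIV :: real set)"
proof -
  define f where "f = (\<lambda>s::real. if 0 \<le> s then v + s *\<^sub>R ee a else v + (-s) *\<^sub>R ee b)"
  define g where "g = (\<lambda>x. if x \<in> ray v a then (x - v) \<bullet> ee a else - ((x - v) \<bullet> ee b))"
  have cf: "continuous_on ({0..} \<union> {..0}) f"
    unfolding f_def by (rule continuous_on_cases) (auto intro!: continuous_intros)
  have cg: "continuous_on (ray v a \<union> ray v b) g"
    unfolding g_def
  proof (rule continuous_on_cases[OF closed_ray closed_ray])
    show "continuous_on (ray v a) (\<lambda>x. (x - v) \<bullet> ee a)" by (intro continuous_intros)
    show "continuous_on (ray v b) (\<lambda>x. - ((x - v) \<bullet> ee b))" by (intro continuous_intros)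
    show "\<forall>x. x \<in> ray v a \<and> x \<notin> ray v a \<or> x \<in> ray v b \<and> x \<in> ray v a \<longrightarrow>
         (x - v) \<bullet> ee a = - ((x - v) \<bullet> ee b)"
    proof (intro allI impI)
      fix x assume "x \<in> ray v a \<and> x \<notin> ray v a \<or> x \<in> ray v b \<and> x \<in> ray v a"
      then have "x \<in> ray v a \<inter> ray v b" by blast
      then have "x = v" using ray_inter[OF assms, of v] by blast
      then show "(x - v) \<bullet> ee a = - ((x - v) \<bullet> ee b)" by simp
    qed
  qed
  have U: "{0::real..} \<union> {..0} = UNIV" by auto
  have nb: "\<And>s. 0 < s \<Longrightarrow> v + s *\<^sub>R ee b \<notin> ray v a"
  proof
    fix s :: real assume "0 < s" "v + s *\<^sub>R ee b \<in> ray v a"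
    then have "v + s *\<^sub>R ee b \<in> ray v a \<inter> ray v b" unfolding ray_def by auto
    then show False using ray_inter[OF assms, of v] \<open>0 < s\<close> by simp
  qed
  have "homeomorphism UNIV (ray v a \<union> ray v b) f g"
  proof (rule homeomorphismI)
    show "continuous_on UNIV f" using cf U by simp
    show "continuous_on (ray v a \<union> ray v b) g" by (rule cg)
    show "f ` UNIV \<subseteq> ray v a \<union> ray v b"
    proof (rule image_subsetI)
      fix s :: real
      show "f s \<in> ray v a \<union> ray v b"
      proof (cases "0 \<le> s")
        case True then show ?thesis unfolding f_def using in_rayI[of s v a] by simp
      next
        case False then show ?thesis unfolding f_def using in_rayI[of "-s" v b] by simp
      qed
    qed
    show "g ` (ray v a \<union> ray v b) \<subseteq> UNIV" by simp
    show "\<And>s. s \<in> UNIV \<Longrightarrow> g (f s) = s"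
    proof -
      fix s :: real
      show "g (f s) = s"
      proof (cases "0 \<le> s")
        case True
        then have "f s \<in> ray v a" unfolding f_def ray_def by auto
        then show ?thesis using True unfolding g_def f_def by (simp add: inner_commute)
      next
        case False
        then have "f s \<notin> ray v a" using nb[of "-s"] unfolding f_def by simp
        then show ?thesis using False unfolding g_def f_def by (simp add: inner_commute)
      qed
    qed
    show "\<And>x. x \<in> ray v a \<union> ray v b \<Longrightarrow> f (g x) = x"
    proof -
      fix x assume x: "x \<in> ray v a \<union> ray v b"
      show "f (g x) = x"
      proof (cases "x \<in> ray v a")
        case True
        then obtain r where r: "x = v + r *\<^sub>R ee a" "0 \<le> r" unfolding ray_def by blast
        then show ?thesis using True unfolding g_def f_def by simp
      next
        case False
        then have "x \<in> ray v b" using x by simp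
        then obtain r where r: "x = v + r *\<^sub>R ee b" "0 \<le> r" unfolding ray_def by blast
        have "r \<noteq> 0" using False r by auto
        then show ?thesis using False r unfolding g_def f_def by simp
      qed
    qed
  qed
  then show ?thesis unfolding homeomorphic_def using homeomorphism_sym by blast
qed

lemma arc_rays:
  assumes "ee a \<noteq> ee b"
  shows "polygonal_arc {ray v a, ray v b}"
proof -
  have ne: "ray v a \<noteq> ray v b" using ray_neq[OF assms] .
  have "{e \<in> {ray v a, ray v b}. is_ray e} = {ray v a, ray v b}" using is_ray_ray by auto
  then have c: "card {e \<in> {ray v a, ray v b}. is_ray e} = 2" using ne by simp
  have m: "edges_meet_ok (ray v a) (ray v b)" "edges_meet_ok (ray v b) (ray v a)"
    unfolding edges_meet_ok_def using ray_inter[OF assms, of v] ray_inter[OF assms[symmetric], of v] edge_vertex_ray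
    by blast+
  have p: "pairwise edges_meet_ok {ray v a, ray v b}"
    unfolding pairwise_def using m by auto
  show ?thesis unfolding polygonal_arc_def
    using homeo_rays[OF assms, of v] is_ray_ray c p by auto
qed

lemma polygon_Sec:
  assumes "a < b" "b < a + 2*pi"
  shows "polygon (Sec v a b) {{ray v a, ray v b}}"
proof -
  have "interior (Sec v a b) \<noteq> {}" using interior_Sec[OF assms, of v] OSec_ne[OF assms(1), of v] by auto
  moreover have "connected (interior (Sec v a b))" using interior_Sec[OF assms, of v] connected_OSec by simp
  ultimately show ?thesis unfolding polygon_def
    using closed_Sec[of v a b] arc_rays[OF ee_neq[OF assms], of v] frontier_Sec[OF assms, of v] by auto
qed

lemma fan3_memb:
  assumes "\<alpha> < \<beta>" "\<beta> < \<gamma>" "\<gamma> < \<alpha> + 2*pi" "x \<noteq> v"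
  obtains t where "\<alpha> \<le> t" "t < \<alpha> + 2*pi"
    "x \<in> Sec v \<alpha> \<beta> \<longleftrightarrow> t \<le> \<beta>"
    "x \<in> Sec v \<beta> \<gamma> \<longleftrightarrow> \<beta> \<le> t \<and> t \<le> \<gamma>"
    "x \<in> Sec v \<gamma> (\<alpha> + 2*pi) \<longleftrightarrow> \<gamma> \<le> t \<or> t = \<alpha>"
    "x \<in> ray v \<alpha> \<longleftrightarrow> t = \<alpha>"
    "x \<in> ray v \<beta> \<longleftrightarrow> t = \<beta>"
    "x \<in> ray v \<gamma> \<longleftrightarrow> t = \<gamma>"
proof -
  obtain y where y: "x = v + y" "y = x - v" using split_pt by blast
  have yn: "y \<noteq> 0" using y assms(4) by simp
  then obtain t where t: "y = norm y *\<^sub>R ee t" "\<alpha> \<le> t" "t < \<alpha> + 2*pi" using polar by blast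
  note M = memb_Sec_w[OF yn t(1) t(2) t(3)]
  have p: "pi > 0" by (rule pi_gt_zero)
  show ?thesis
  proof (rule that[OF t(2) t(3)])
    show "x \<in> Sec v \<alpha> \<beta> \<longleftrightarrow> t \<le> \<beta>" unfolding y(1) using M[of \<alpha> \<beta> v] assms t p by auto
    show "x \<in> Sec v \<beta> \<gamma> \<longleftrightarrow> \<beta> \<le> t \<and> t \<le> \<gamma>" unfolding y(1) using M[of \<beta> \<gamma> v] assms t p by auto
    show "x \<in> Sec v \<gamma> (\<alpha> + 2*pi) \<longleftrightarrow> \<gamma> \<le> t \<or> t = \<alpha>" unfolding y(1) using M[of \<gamma> "\<alpha> + 2*pi" v] assms t p by auto
    show "x \<in> ray v \<alpha> \<longleftrightarrow> t = \<alpha>" unfolding y(1) ray_Sec using M[of \<alpha> \<alpha> v] assms t p by auto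
    show "x \<in> ray v \<beta> \<longleftrightarrow> t = \<beta>" unfolding y(1) ray_Sec using M[of \<beta> \<beta> v] assms t p by auto
    show "x \<in> ray v \<gamma> \<longleftrightarrow> t = \<gamma>" unfolding y(1) ray_Sec using M[of \<gamma> \<gamma> v] assms t p by auto
  qed
qed

lemma fan3_sets:
  assumes "\<alpha> < \<beta>" "\<beta> < \<gamma>" "\<gamma> < \<alpha> + 2*pi"
  shows "Sec v \<alpha> \<beta> \<union> Sec v \<beta> \<gamma> \<union> Sec v \<gamma> (\<alpha> + 2*pi) = UNIV"
    "Sec v \<alpha> \<beta> \<inter> Sec v \<beta> \<gamma> = (ray v \<alpha> \<union> ray v \<beta>) \<inter> (ray v \<beta> \<union> ray v \<gamma>)"
    "Sec v \<beta> \<gamma> \<inter> Sec v \<gamma> (\<alpha> + 2*pi) = (ray v \<beta> \<union> ray v \<gamma>) \<inter> (ray v \<gamma> \<union> ray v \<alpha>)"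
    "Sec v \<alpha> \<beta> \<inter> Sec v \<gamma> (\<alpha> + 2*pi) = (ray v \<alpha> \<union> ray v \<beta>) \<inter> (ray v \<gamma> \<union> ray v \<alpha>)"
proof -
  have vin: "v \<in> Sec v \<alpha> \<beta>" "v \<in> Sec v \<beta> \<gamma>" "v \<in> Sec v \<gamma> (\<alpha> + 2*pi)"
    using v_in_Sec assms by auto
  {
    fix x assume xv: "x \<noteq> v"
    obtain t where "\<alpha> \<le> t" "t < \<alpha> + 2*pi"
    "x \<in> Sec v \<alpha> \<beta> \<longleftrightarrow> t \<le> \<beta>"
    "x \<in> Sec v \<beta> \<gamma> \<longleftrightarrow> \<beta> \<le> t \<and> t \<le> \<gamma>"
    "x \<in> Sec v \<gamma> (\<alpha> + 2*pi) \<longleftrightarrow> \<gamma> \<le> t \<or> t = \<alpha>"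
    "x \<in> ray v \<alpha> \<longleftrightarrow> t = \<alpha>"
    "x \<in> ray v \<beta> \<longleftrightarrow> t = \<beta>"
    "x \<in> ray v \<gamma> \<longleftrightarrow> t = \<gamma>" by (rule fan3_memb[OF assms xv])
    then have "x \<in> Sec v \<alpha> \<beta> \<union> Sec v \<beta> \<gamma> \<union> Sec v \<gamma> (\<alpha> + 2*pi)"
      "x \<in> Sec v \<alpha> \<beta> \<inter> Sec v \<beta> \<gamma> \<longleftrightarrow> x \<in> (ray v \<alpha> \<union> ray v \<beta>) \<inter> (ray v \<beta> \<union> ray v \<gamma>)"
      "x \<in> Sec v \<beta> \<gamma> \<inter> Sec v \<gamma> (\<alpha> + 2*pi) \<longleftrightarrow> x \<in> (ray v \<beta> \<union> ray v \<gamma>) \<inter> (ray v \<gamma> \<union> ray v \<alpha>)"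
      "x \<in> Sec v \<alpha> \<beta> \<inter> Sec v \<gamma> (\<alpha> + 2*pi) \<longleftrightarrow> x \<in> (ray v \<alpha> \<union> ray v \<beta>) \<inter> (ray v \<gamma> \<union> ray v \<alpha>)"
      using assms by auto
  } note * = this
  show "Sec v \<alpha> \<beta> \<union> Sec v \<beta> \<gamma> \<union> Sec v \<gamma> (\<alpha> + 2*pi) = UNIV"
  proof (rule set_eqI)
    fix x show "x \<in> Sec v \<alpha> \<beta> \<union> Sec v \<beta> \<gamma> \<union> Sec v \<gamma> (\<alpha> + 2*pi) \<longleftrightarrow> x \<in> UNIV"
      using *(1)[of x] vin by (cases "x = v") auto
  qed
  show "Sec v \<alpha> \<beta> \<inter> Sec v \<beta> \<gamma> = (ray v \<alpha> \<union> ray v \<beta>) \<inter> (ray v \<beta> \<union> ray v \<gamma>)"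
    using *(2) vin by (intro set_eqI, case_tac "x = v") auto
  show "Sec v \<beta> \<gamma> \<inter> Sec v \<gamma> (\<alpha> + 2*pi) = (ray v \<beta> \<union> ray v \<gamma>) \<inter> (ray v \<gamma> \<union> ray v \<alpha>)"
    using *(3) vin by (intro set_eqI, case_tac "x = v") auto
  show "Sec v \<alpha> \<beta> \<inter> Sec v \<gamma> (\<alpha> + 2*pi) = (ray v \<alpha> \<union> ray v \<beta>) \<inter> (ray v \<gamma> \<union> ray v \<alpha>)"
    using *(4) vin by (intro set_eqI, case_tac "x = v") auto
qed

lemma pv_single: "piece_vertices (S, {{ray v a, ray v b}}) = {v}"
  unfolding piece_vertices_def piece_edges_def using edges_vertices_rays by simp

lemma realize:
  assumes ab: "\<alpha> < \<beta>" and bc: "\<beta> < \<gamma>" and ca: "\<gamma> < \<alpha> + 2*pi"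
    and g1: "\<forall>x\<in>Sec v \<alpha> \<beta>. g x = c + b1 \<bullet> (x - v)"
    and g2: "\<forall>x\<in>Sec v \<beta> \<gamma>. g x = c + b2 \<bullet> (x - v)"
    and g3: "\<forall>x\<in>Sec v \<gamma> (\<alpha> + 2*pi). g x = c + b3 \<bullet> (x - v)"
  shows "\<exists>Q. CPA_pieces g Q \<and> card Q = 3 \<and> v_function v Q"
proof -
  define S1 where "S1 = Sec v \<alpha> \<beta>"
  define S2 where "S2 = Sec v \<beta> \<gamma>"
  define S3 where "S3 = Sec v \<gamma> (\<alpha> + 2*pi)"
  define E1 where "E1 = {ray v \<alpha>, ray v \<beta>}"
  define E2 where "E2 = {ray v \<beta>, ray v \<gamma>}"
  define E3 where "E3 = {ray v \<gamma>, ray v \<alpha>}"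
  define Q where "Q = {(S1, {E1}), (S2, {E2}), (S3, {E3})}"
  have n1: "ee \<alpha> \<noteq> ee \<beta>" using ee_neq ab bc ca by simp
  have n2: "ee \<beta> \<noteq> ee \<gamma>" using ee_neq ab bc ca by simp
  have n3: "ee \<alpha> \<noteq> ee \<gamma>" using ee_neq ab bc ca by simp
  have r12: "ray v \<alpha> \<noteq> ray v \<beta>" using ray_neq[OF n1] .
  have r23: "ray v \<beta> \<noteq> ray v \<gamma>" using ray_neq[OF n2] .
  have r13: "ray v \<alpha> \<noteq> ray v \<gamma>" using ray_neq[OF n3] .
  have E12: "E1 \<noteq> E2" unfolding E1_def E2_def using r12 r13 by auto
  have E13: "E1 \<noteq> E3" unfolding E1_def E3_def using r12 r23 by auto
  have E23: "E2 \<noteq> E3" unfolding E2_def E3_def using r12 r23 by auto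
  have cardQ: "card Q = 3" unfolding Q_def using E12 E13 E23 by simp
  have P1: "polygon S1 {E1}" unfolding S1_def E1_def using polygon_Sec ab bc ca by simp
  have P2: "polygon S2 {E2}" unfolding S2_def E2_def using polygon_Sec ab bc ca by simp
  have P3: "polygon S3 {E3}" unfolding S3_def E3_def using polygon_Sec[of \<gamma> "\<alpha> + 2*pi" v] ab bc ca
    by (simp add: insert_commute)
  have fr1: "frontier S1 = ray v \<alpha> \<union> ray v \<beta>" unfolding S1_def using frontier_Sec ab bc ca by simp
  have fr2: "frontier S2 = ray v \<beta> \<union> ray v \<gamma>" unfolding S2_def using frontier_Sec ab bc ca by simp
  have fr3: "frontier S3 = ray v \<gamma> \<union> ray v \<alpha>" unfolding S3_def using frontier_Sec[of \<gamma> "\<alpha> + 2*pi" v] ab bc ca by simp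
  note FS = fan3_sets[OF ab bc ca, of v, folded S1_def S2_def S3_def]
  have pv: "piece_vertices (S1, {E1}) = {v}" "piece_vertices (S2, {E2}) = {v}" "piece_vertices (S3, {E3}) = {v}"
    unfolding E1_def E2_def E3_def by (simp_all add: pv_single)
  have cont: "continuous_on UNIV g"
  proof -
    have "continuous_on S1 g"
      by (rule continuous_on_eq[of _ "\<lambda>x. c + b1 \<bullet> (x - v)"]) (auto intro!: continuous_intros simp: g1 S1_def)
    moreover have "continuous_on S2 g"
      by (rule continuous_on_eq[of _ "\<lambda>x. c + b2 \<bullet> (x - v)"]) (auto intro!: continuous_intros simp: g2 S2_def)
    moreover have "continuous_on S3 g"
      by (rule continuous_on_eq[of _ "\<lambda>x. c + b3 \<bullet> (x - v)"]) (auto intro!: continuous_intros simp: g3 S3_def)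
    ultimately have "continuous_on (S1 \<union> S2 \<union> S3) g"
      unfolding S1_def S2_def S3_def by (intro continuous_on_closed_Un closed_Un closed_Sec)
    then show ?thesis using FS(1) by simp
  qed
  have aff: "\<exists>a c'. \<forall>x\<in>S. g x = a \<bullet> x + c'" if "\<forall>x\<in>S. g x = c + b \<bullet> (x - v)" for S b
    using that by (intro exI[of _ b] exI[of _ "c - b \<bullet> v"]) (simp add: inner_diff_right)
  have "CPA_pieces g Q"
    unfolding CPA_pieces_def
  proof (intro conjI)
    show "continuous_on UNIV g" by (rule cont)
    show "finite Q" unfolding Q_def by simp
    show "\<forall>A\<in>Q. polygon (fst A) (snd A)" unfolding Q_def using P1 P2 P3 by simp
    show "\<Union> (fst ` Q) = UNIV" unfolding Q_def using FS(1) by auto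
    show "\<forall>A\<in>Q. \<forall>B\<in>Q. A \<noteq> B \<longrightarrow> fst A \<inter> fst B = frontier (fst A) \<inter> frontier (fst B)"
      unfolding Q_def using FS(2,3,4) fr1 fr2 fr3 by (simp add: Int_commute)
    show "\<forall>A\<in>Q. \<forall>B\<in>Q. \<forall>w\<in>piece_vertices A. w \<in> fst B \<longrightarrow> w \<in> piece_vertices B"
      unfolding Q_def using pv by simp
    show "\<forall>A\<in>Q. \<exists>a c. \<forall>x\<in>fst A. g x = a \<bullet> x + c"
      unfolding Q_def using aff[OF g1[folded S1_def]] aff[OF g2[folded S2_def]] aff[OF g3[folded S3_def]] by simp
  qed
  moreover have "v_function v Q"
    unfolding v_function_def
  proof
    show "(\<Union>A\<in>Q. piece_vertices A) = {v}" unfolding Q_def using pv by simp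
    show "\<forall>A\<in>Q. \<forall>e\<in>piece_edges A. is_ray e"
      unfolding Q_def piece_edges_def E1_def E2_def E3_def using is_ray_ray by simp
  qed
  ultimately show ?thesis using cardQ by blast
qed

lemma Sec_mono: "a' \<le> a \<Longrightarrow> b \<le> b' \<Longrightarrow> Sec v a b \<subseteq> Sec v a' b'"
  unfolding Sec_def by force

lemma Sec_I1:
  assumes "a < b" "b \<le> c" "c < d" "d < a + 2*pi"
  shows "Sec v a b \<inter> Sec v c d \<subseteq> ray v b"
proof
  fix x assume x: "x \<in> Sec v a b \<inter> Sec v c d"
  obtain y where y: "x = v + y" "y = x - v" using split_pt by blast
  show "x \<in> ray v b"
  proof (cases "y = 0")
    case True then show ?thesis using y(1) by simp
  next
    case False
    then obtain t where t: "y = norm y *\<^sub>R ee t" "a \<le> t" "t < a + 2*pi" using polar by blast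
    note M = memb_Sec_w[OF False t(1) t(2) t(3)]
    have p: "pi > 0" by (rule pi_gt_zero)
    have "t \<le> b" using x M[of a b v] assms t p unfolding y(1) by auto
    moreover have "c \<le> t" using x M[of c d v] assms t p unfolding y(1) by auto
    ultimately show ?thesis using M[of b b v] assms t p unfolding y(1) ray_Sec by auto
  qed
qed

lemma Sec_I2:
  assumes "a < b" "b < c" "c < d" "d = a + 2*pi"
  shows "Sec v a b \<inter> Sec v c d \<subseteq> ray v a"
proof
  fix x assume x: "x \<in> Sec v a b \<inter> Sec v c d"
  obtain y where y: "x = v + y" "y = x - v" using split_pt by blast
  show "x \<in> ray v a"
  proof (cases "y = 0")
    case True then show ?thesis using y(1) by simp
  next
    case False
    then obtain t where t: "y = norm y *\<^sub>R ee t" "a \<le> t" "t < a + 2*pi" using polar by blast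
    note M = memb_Sec_w[OF False t(1) t(2) t(3)]
    have p: "pi > 0" by (rule pi_gt_zero)
    have "t \<le> b" using x M[of a b v] assms t p unfolding y(1) by auto
    moreover have "c \<le> t \<or> t \<le> a" using x M[of c d v] assms t p unfolding y(1) by auto
    ultimately show ?thesis using M[of a a v] assms t p unfolding y(1) ray_Sec by auto
  qed
qed

lemma mono_th:
  assumes "\<forall>i<k. th i < th (Suc i)" "i < j" "j \<le> k"
  shows "th i < (th j :: real)"
  using assms(2,3)
proof (induction j)
  case 0 then show ?case by simp
next
  case (Suc j)
  show ?case
  proof (cases "i = j")
    case True then show ?thesis using assms(1) Suc by simp
  next
    case False
    then have "th i < th j" using Suc by simp
    also have "th j < th (Suc j)" using assms(1) Suc by simp
    finally show ?thesis .
  qed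
qed

lemma mono_th_le:
  assumes "\<forall>i<k. th i < th (Suc i)" "i \<le> j" "j \<le> k"
  shows "th i \<le> (th j :: real)"
  using mono_th[OF assms(1)] assms(2,3) by (cases "i = j") (auto intro: less_imp_le)

lemma locate_weak:
  assumes "\<forall>i<k. th i < th (Suc i)" "th 0 \<le> t" "t < (th k :: real)"
  shows "\<exists>j<k. th j \<le> t \<and> t < th (Suc j)"
  using assms
proof (induction k)
  case 0 then show ?case by simp
next
  case (Suc k)
  show ?case
  proof (cases "t < th k")
    case True
    then obtain j where "j < k" "th j \<le> t" "t < th (Suc j)" using Suc by auto
    then show ?thesis by (intro exI[of _ j]) simp
  next
    case False
    then show ?thesis using Suc by (intro exI[of _ k]) simp
  qed
qed

lemma fan_cover:
  assumes "\<forall>i<k. th i < th (Suc i)" "th k = th 0 + 2*pi" "0 < k"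
  shows "\<exists>j<k. x \<in> Sec v (th j) (th (Suc j))"
proof -
  obtain y where y: "x = v + y" "y = x - v" using split_pt by blast
  show ?thesis
  proof (cases "y = 0")
    case True
    then show ?thesis using y(1) assms v_in_Sec[of "th 0" "th (Suc 0)" v] by (intro exI[of _ 0]) auto
  next
    case False
    then obtain t where t: "y = norm y *\<^sub>R ee t" "th 0 \<le> t" "t < th 0 + 2*pi" using polar by blast
    then obtain j where j: "j < k" "th j \<le> t" "t < th (Suc j)" using locate_weak[OF assms(1), of t] assms by auto
    have "x \<in> Sec v (th j) (th (Suc j))" unfolding y(1) Sec_def
      by (rule CollectI, rule exI[of _ "norm y"], rule exI[of _ t]) (use t j in auto)
    then show ?thesis using j by blast
  qed
qed

lemma telesc: fixes a :: "nat \<Rightarrow> 'a::ab_group_add" shows "(\<Sum>n=1..j. (a n - a (n - 1))) = a j - a 0"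
  by (induction j) (auto simp: algebra_simps)

lemma indep2:
  fixes z p q :: "real^2"
  assumes "z \<bullet> p = 0" "z \<bullet> q = 0" "p$1 * q$2 - p$2 * q$1 \<noteq> 0"
  shows "z = 0"
proof -
  have "z$1 * (p$1 * q$2 - p$2 * q$1) = q$2 * (z \<bullet> p) - p$2 * (z \<bullet> q)"
    by (simp add: inner2 algebra_simps)
  then have 1: "z$1 = 0" using assms by simp
  have "z$2 * (p$1 * q$2 - p$2 * q$1) = p$1 * (z \<bullet> q) - q$1 * (z \<bullet> p)"
    by (simp add: inner2 algebra_simps)
  then have 2: "z$2 = 0" using assms by simp
  show ?thesis using 1 2 by (simp add: vec2_eq)
qed

definition perp :: "real^2 \<Rightarrow> real^2" where "perp p = vector [- p$2, p$1]"

lemma perp_inner: "perp p \<bullet> p = 0" "perp p \<bullet> q = p$1 * q$2 - p$2 * q$1"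
  by (simp_all add: perp_def inner2 algebra_simps)

lemma sin_nz:
  assumes "0 < x" "x < 2*pi" "x \<noteq> pi"
  shows "sin x \<noteq> 0"
proof
  assume "sin x = 0"
  then obtain i::int where i: "x = of_int i * pi" using sin_zero_iff_int2 by blast
  then have "0 < of_int i * pi" "of_int i * pi < 2 * pi" using assms by auto
  then have "0 < i" "i < 2" using pi_gt_zero by (simp_all add: zero_less_mult_iff mult_less_cancel_right)
  then have "i = 1" by linarith
  then show False using i assms by simp
qed

lemma decompose:
  fixes th :: "nat \<Rightarrow> real" and a :: "nat \<Rightarrow> real^2"
  assumes l2: "2 \<le> l"
    and mono: "\<forall>i<Suc l. th i < th (Suc i)"
    and wrap: "th (Suc l) = th 0 + 2*pi"
    and nopi: "th (Suc l) - th l \<noteq> pi"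
    and fa: "\<forall>i<Suc l. \<forall>x\<in>Sec v (th i) (th (Suc i)). f x = c + a i \<bullet> (x - v)"
  shows "\<exists>F. (\<forall>n\<in>{1..l-1}. \<exists>Q. CPA_pieces (F n) Q \<and> card Q = 3 \<and> v_function v Q)
            \<and> f = (\<lambda>x. \<Sum>n=1..l-1. F n x)"
proof -
  have thlt: "th i < th j" if "i < j" "j \<le> Suc l" for i j using mono_th[OF mono that] .
  have thle: "th i \<le> th j" if "i \<le> j" "j \<le> Suc l" for i j using mono_th_le[OF mono that] .
  define p where "p = ee (th 0)"
  define q where "q = ee (th l)"
  define cr where "cr = p$1 * q$2 - p$2 * q$1"
  have cr_sin: "cr = sin (th l - th 0)" unfolding cr_def p_def q_def by (simp add: sin_diff algebra_simps)
  have "0 < th l - th 0" using thlt[of 0 l] l2 by simp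
  moreover have "th l - th 0 < 2*pi" using thlt[of l "Suc l"] wrap by simp
  moreover have "th l - th 0 \<noteq> pi" using nopi wrap by simp
  ultimately have crnz: "cr \<noteq> 0" unfolding cr_sin by (rule sin_nz)
  define d where "d n = a n - a (n - 1)" for n
  define m where "m n = ((d n \<bullet> q) / cr) *\<^sub>R perp p" for n
  have mp: "m n \<bullet> p = 0" for n unfolding m_def by (simp add: perp_inner)
  have mq: "m n \<bullet> q = d n \<bullet> q" for n unfolding m_def using crnz by (simp add: perp_inner cr_def)
  have D1: "a n \<bullet> ee (th n) = a (n - 1) \<bullet> ee (th n)" if "1 \<le> n" "n \<le> l" for n
  proof -
    have m1: "v + 1 *\<^sub>R ee (th n) \<in> Sec v (th (n - 1)) (th (Suc (n - 1)))"
      unfolding Sec_def using that thle[of "n - 1" n] by (intro CollectI exI[of _ 1] exI[of _ "th n"]) auto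
    have i1: "n - 1 < Suc l" using that by simp
    have "f (v + 1 *\<^sub>R ee (th n)) = c + a (n - 1) \<bullet> ((v + 1 *\<^sub>R ee (th n)) - v)"
      using fa i1 m1 by blast
    then have e1: "f (v + 1 *\<^sub>R ee (th n)) = c + a (n - 1) \<bullet> ee (th n)" by simp
    have m2: "v + 1 *\<^sub>R ee (th n) \<in> Sec v (th n) (th (Suc n))"
      unfolding Sec_def using that thle[of n "Suc n"] by (intro CollectI exI[of _ 1] exI[of _ "th n"]) auto
    have i2: "n < Suc l" using that by simp
    have "f (v + 1 *\<^sub>R ee (th n)) = c + a n \<bullet> ((v + 1 *\<^sub>R ee (th n)) - v)"
      using fa i2 m2 by blast
    then have e2: "f (v + 1 *\<^sub>R ee (th n)) = c + a n \<bullet> ee (th n)" by simp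
    show ?thesis using e1 e2 by simp
  qed
  have D2: "a l \<bullet> p = a 0 \<bullet> p"
  proof -
    have "v + 1 *\<^sub>R ee (th 0) \<in> Sec v (th 0) (th (Suc 0))"
      unfolding Sec_def using thle[of 0 1] by (intro CollectI exI[of _ 1] exI[of _ "th 0"]) auto
    then have "f (v + 1 *\<^sub>R ee (th 0)) = c + a 0 \<bullet> p" using fa unfolding p_def by auto
    moreover have "v + 1 *\<^sub>R ee (th (Suc l)) \<in> Sec v (th l) (th (Suc l))"
      unfolding Sec_def using thle[of l "Suc l"] by (intro CollectI exI[of _ 1] exI[of _ "th (Suc l)"]) auto
    then have "f (v + 1 *\<^sub>R ee (th 0)) = c + a l \<bullet> p" using fa wrap unfolding p_def by auto
    ultimately show ?thesis by simp
  qed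
  define G where "G n x = (if x \<in> Sec v (th 0) (th n) then 0
      else if x \<in> Sec v (th n) (th l) then d n \<bullet> (x - v) else m n \<bullet> (x - v))" for n x
  have G1: "G n x = 0" if "x \<in> Sec v (th 0) (th n)" for n x using that unfolding G_def by simp
  have G2: "G n x = d n \<bullet> (x - v)" if "x \<in> Sec v (th n) (th l)" "1 \<le> n" "n \<le> l - 1" for n x
  proof (cases "x \<in> Sec v (th 0) (th n)")
    case True
    have "th 0 < th n" "th n < th l" "th l < th 0 + 2*pi" using thlt[of 0 n] thlt[of n l] thlt[of l "Suc l"] wrap that by auto
    then have "x \<in> ray v (th n)" using Sec_I1[of "th 0" "th n" "th n" "th l" v] True that by auto
    then obtain r where "x = v + r *\<^sub>R ee (th n)" unfolding ray_def by blast
    then have "d n \<bullet> (x - v) = 0" using D1[of n] that unfolding d_def by (simp add: inner_diff_left)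
    then show ?thesis using True unfolding G_def by simp
  next
    case False then show ?thesis using that unfolding G_def by simp
  qed
  have G3: "G n x = m n \<bullet> (x - v)" if "x \<in> Sec v (th l) (th 0 + 2*pi)" "1 \<le> n" "n \<le> l - 1" for n x
  proof -
    have o: "th 0 < th n" "th n < th l" "th l < th 0 + 2*pi" using thlt[of 0 n] thlt[of n l] thlt[of l "Suc l"] wrap that by auto
    show ?thesis
    proof (cases "x \<in> Sec v (th 0) (th n)")
      case True
      then have "x \<in> ray v (th 0)" using Sec_I2[of "th 0" "th n" "th l" "th 0 + 2*pi" v] o that by auto
      then obtain r where "x = v + r *\<^sub>R ee (th 0)" unfolding ray_def by blast
      then have "m n \<bullet> (x - v) = 0" using mp[of n] unfolding p_def by simp
      then show ?thesis using True unfolding G_def by simp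
    next
      case False
      show ?thesis
      proof (cases "x \<in> Sec v (th n) (th l)")
        case True
        have "th l < th n + 2*pi" using o by simp
        then have "x \<in> ray v (th l)" using Sec_I1[of "th n" "th l" "th l" "th 0 + 2*pi" v] True that o by auto
        then obtain r where "x = v + r *\<^sub>R ee (th l)" unfolding ray_def by blast
        then have "m n \<bullet> (x - v) = d n \<bullet> (x - v)" using mq[of n] unfolding q_def by simp
        then show ?thesis using True False unfolding G_def by simp
      next
        case False2: False
        then show ?thesis using False unfolding G_def by simp
      qed
    qed
  qed
  define F where "F n x = (if n = 1 then c + a 0 \<bullet> (x - v) else 0) + G n x" for n x
  have goodF: "\<exists>Q. CPA_pieces (F n) Q \<and> card Q = 3 \<and> v_function v Q" if n: "n \<in> {1..l-1}" for n
  proof -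
    define c' where "c' = (if n = 1 then c else 0)"
    define a' where "a' = (if n = 1 then a 0 else 0)"
    have Fn: "F n x = c' + a' \<bullet> (x - v) + G n x" for x unfolding F_def c'_def a'_def by simp
    have o: "th 0 < th n" "th n < th l" "th l < th 0 + 2*pi" using thlt[of 0 n] thlt[of n l] thlt[of l "Suc l"] wrap n by auto
    show ?thesis
    proof (rule realize[OF o])
      show "\<forall>x\<in>Sec v (th 0) (th n). F n x = c' + (a' + 0) \<bullet> (x - v)" using G1 Fn by simp
      show "\<forall>x\<in>Sec v (th n) (th l). F n x = c' + (a' + d n) \<bullet> (x - v)" using G2 Fn n by (simp add: inner_add_left)
      show "\<forall>x\<in>Sec v (th l) (th 0 + 2*pi). F n x = c' + (a' + m n) \<bullet> (x - v)" using G3 Fn n by (simp add: inner_add_left)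
    qed
  qed
  have sumF: "f x = (\<Sum>n=1..l-1. F n x)" for x
  proof -
    obtain j where j: "j < Suc l" "x \<in> Sec v (th j) (th (Suc j))" using fan_cover[OF mono wrap] by blast
    have sF: "(\<Sum>n=1..l-1. F n x) = c + a 0 \<bullet> (x - v) + (\<Sum>n=1..l-1. G n x)"
    proof -
      have "(\<Sum>n=1..l-1. F n x) = (\<Sum>n=1..l-1. (if n = 1 then c + a 0 \<bullet> (x - v) else 0)) + (\<Sum>n=1..l-1. G n x)"
        unfolding F_def by (simp add: sum.distrib)
      also have "(\<Sum>n=1..l-1. (if n = 1 then c + a 0 \<bullet> (x - v) else 0)) = c + a 0 \<bullet> (x - v)"
        using l2 by (simp add: sum.delta)
      finally show ?thesis .
    qed
    show ?thesis
    proof (cases "j = l")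
      case True
      have xs: "x \<in> Sec v (th l) (th 0 + 2*pi)" using j True wrap by simp
      have "(\<Sum>n=1..l-1. G n x) = (\<Sum>n=1..l-1. m n \<bullet> (x - v))"
        using G3[OF xs] by (intro sum.cong) auto
      also have "\<dots> = (\<Sum>n=1..l-1. m n) \<bullet> (x - v)" by (simp add: inner_sum_left)
      finally have sG: "(\<Sum>n=1..l-1. G n x) = (\<Sum>n=1..l-1. m n) \<bullet> (x - v)" .
      define z where "z = a l - a 0 - (\<Sum>n=1..l-1. m n)"
      have "z \<bullet> p = 0" unfolding z_def using D2 mp by (simp add: inner_diff_left inner_sum_left)
      moreover have "z \<bullet> q = 0"
      proof -
        have "(\<Sum>n=1..l-1. m n) \<bullet> q = (\<Sum>n=1..l-1. d n) \<bullet> q" using mq by (simp add: inner_sum_left)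
        also have "(\<Sum>n=1..l-1. d n) = a (l - 1) - a 0" unfolding d_def by (rule telesc)
        finally have "(\<Sum>n=1..l-1. m n) \<bullet> q = (a (l - 1) - a 0) \<bullet> q" .
        moreover have "a l \<bullet> q = a (l - 1) \<bullet> q" using D1[of l] l2 unfolding q_def by simp
        ultimately show ?thesis unfolding z_def by (simp add: inner_diff_left)
      qed
      ultimately have "z = 0" using indep2 crnz unfolding cr_def by blast
      then have al: "a l = a 0 + (\<Sum>n=1..l-1. m n)" unfolding z_def by (simp add: algebra_simps)
      have "f x = c + a l \<bullet> (x - v)" using fa j True by auto
      then show ?thesis using sF sG al by (simp add: inner_add_left)
    next
      case False
      then have jl: "j \<le> l - 1" using j by simp
      have "(\<Sum>n=1..l-1. G n x) = (\<Sum>n=1..l-1. (if n \<le> j then d n \<bullet> (x - v) else 0))"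
      proof (rule sum.cong)
        fix n assume n: "n \<in> {1..l-1}"
        show "G n x = (if n \<le> j then d n \<bullet> (x - v) else 0)"
        proof (cases "n \<le> j")
          case True
          have "Sec v (th j) (th (Suc j)) \<subseteq> Sec v (th n) (th l)"
          proof (rule Sec_mono)
            show "th n \<le> th j" using True jl thle[of n j] by simp
            show "th (Suc j) \<le> th l" using jl thle[of "Suc j" l] l2 by simp
          qed
          then show ?thesis using G2[of x n] j n True by auto
        next
          case False
          have "Sec v (th j) (th (Suc j)) \<subseteq> Sec v (th 0) (th n)"
            by (rule Sec_mono) (use False n thle in auto)
          then show ?thesis using G1[of x n] j False by auto
        qed
      qed simp
      also have "\<dots> = (\<Sum>n\<in>{n\<in>{1..l-1}. n \<le> j}. d n \<bullet> (x - v))"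
        by (rule sum.inter_filter[symmetric]) simp
      also have "{n\<in>{1..l-1}. n \<le> j} = {1..j}" using jl by auto
      also have "(\<Sum>n=1..j. d n \<bullet> (x - v)) = (\<Sum>n=1..j. d n) \<bullet> (x - v)" by (simp add: inner_sum_left)
      also have "(\<Sum>n=1..j. d n) = a j - a 0" unfolding d_def by (rule telesc)
      finally have sG: "(\<Sum>n=1..l-1. G n x) = (a j - a 0) \<bullet> (x - v)" .
      have "f x = c + a j \<bullet> (x - v)" using fa j by auto
      then show ?thesis using sF sG by (simp add: inner_diff_left)
    qed
  qed
  show ?thesis using goodF sumF by blast
qed

lemma rep_ray: "\<exists>t. \<omega> \<le> t \<and> t < \<omega> + 2*pi \<and> ray v t = ray v \<theta>"
proof -
  obtain t where t: "\<omega> \<le> t" "t < \<omega> + 2*pi" "ee \<theta> = norm (ee \<theta>) *\<^sub>R ee t"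
    using polar[of "ee \<theta>" \<omega>] by auto
  then have "ee \<theta> = ee t" by simp
  then have "ray v t = ray v \<theta>" unfolding ray_def by simp
  then show ?thesis using t by blast
qed

lemma ray_memb_w:
  assumes "y \<noteq> 0" "y = norm y *\<^sub>R ee t" "\<omega> \<le> t" "t < \<omega> + 2*pi" "\<omega> \<le> \<theta>" "\<theta> < \<omega> + 2*pi"
  shows "v + y \<in> ray v \<theta> \<longleftrightarrow> t = \<theta>"
  using memb_Sec_w[OF assms(1-4), of \<theta> \<theta> v] assms pi_gt_zero unfolding ray_Sec by auto

lemma ray_eq_w:
  assumes "ray v s = ray v t" "\<omega> \<le> s" "s < \<omega> + 2*pi" "\<omega> \<le> t" "t < \<omega> + 2*pi"
  shows "s = t"
proof (rule ccontr)
  assume "s \<noteq> t"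
  then have "ee s \<noteq> ee t"
    using ee_neq[of s t] ee_neq[of t s] assms by (cases "s < t") auto
  then show False using ray_neq assms(1) by blast
qed

lemma wrap_choice:
  assumes fin: "finite D" and rays: "\<forall>e\<in>D. \<exists>\<theta>. e = ray v \<theta>" and c3: "3 \<le> card D"
  shows "\<exists>\<omega>. ray v \<omega> \<in> D \<and> (ray v (\<omega> + pi) \<notin> D \<or> (\<exists>t. \<omega> + pi < t \<and> t < \<omega> + 2*pi \<and> ray v t \<in> D))"
proof (rule ccontr)
  assume H: "\<not> ?thesis"
  have ne: "D \<noteq> {}" using c3 by auto
  then obtain e where eD: "e \<in> D" by blast
  then obtain \<omega> where "e = ray v \<omega>" using rays by blast
  then have w: "ray v \<omega> \<in> D" using eD by simp
  have A: "ray v (\<omega> + pi) \<in> D" "\<And>t. \<omega> + pi < t \<Longrightarrow> t < \<omega> + 2*pi \<Longrightarrow> ray v t \<notin> D"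
    using H w by blast+
  have B: "\<And>t. \<omega> + pi + pi < t \<Longrightarrow> t < \<omega> + pi + 2*pi \<Longrightarrow> ray v t \<notin> D"
    using H A(1) by blast
  have "D \<subseteq> {ray v \<omega>, ray v (\<omega> + pi)}"
  proof
    fix e assume e: "e \<in> D"
    then obtain \<theta> where th: "e = ray v \<theta>" using rays by blast
    obtain s where s: "\<omega> \<le> s" "s < \<omega> + 2*pi" "ray v s = ray v \<theta>" using rep_ray by blast
    have sD: "ray v s \<in> D" using e th s by simp
    have "\<not> (\<omega> + pi < s)" using A(2)[of s] s sD by auto
    moreover have "\<not> (\<omega> < s \<and> s < \<omega> + pi)"
    proof
      assume "\<omega> < s \<and> s < \<omega> + pi"
      then have "ray v (s + 2*pi) \<notin> D" using B[of "s + 2*pi"] by auto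
      then show False using sD by simp
    qed
    ultimately have "s = \<omega> \<or> s = \<omega> + pi" using s by auto
    then show "e \<in> {ray v \<omega>, ray v (\<omega> + pi)}" using th s by auto
  qed
  then have "card D \<le> card {ray v \<omega>, ray v (\<omega> + pi)}" by (rule card_mono[rotated]) simp
  also have "\<dots> \<le> 2" by (simp add: card_insert_le_m1)
  finally show False using c3 by simp
qed

lemma OSec_disj:
  assumes mono: "\<forall>i<k. th i < th (Suc i)" and wrap: "th k = th 0 + 2*pi"
    and ij: "i < j" "j < k"
  shows "OSec v (th i) (th (Suc i)) \<inter> OSec v (th j) (th (Suc j)) = {}"
proof (rule ccontr)
  assume "\<not> ?thesis"
  then obtain x where x: "x \<in> OSec v (th i) (th (Suc i))" "x \<in> OSec v (th j) (th (Suc j))" by blast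
  obtain y where y: "x = v + y" "y = x - v" using split_pt by blast
  have yn: "y \<noteq> 0" using x(1) y(1) v_notin_OSec by auto
  then obtain t where t: "y = norm y *\<^sub>R ee t" "th 0 \<le> t" "t < th 0 + 2*pi" using polar by blast
  note M = memb_OSec_w[OF yn t(1) t(2) t(3)]
  have le: "th a \<le> th b" if "a \<le> b" "b \<le> k" for a b using mono_th_le[OF mono that] .
  have "th 0 \<le> th i" "th (Suc i) \<le> th k" "th 0 \<le> th j" "th (Suc j) \<le> th k" "th (Suc i) \<le> th j"
    using le ij by auto
  then have "th i < t \<and> t < th (Suc i)" "th j < t \<and> t < th (Suc j)"
    using x M[of "th i" "th (Suc i)" v] M[of "th j" "th (Suc j)" v] t wrap pi_gt_zero unfolding y(1) by auto
  then show False using \<open>th (Suc i) \<le> th j\<close> by simp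
qed

lemma fan_exists:
  assumes fin: "finite D" and rays: "\<forall>e\<in>D. \<exists>\<theta>. e = ray v \<theta>" and c3: "3 \<le> card D"
  shows "\<exists>l th. 2 \<le> l \<and> Suc l = card D \<and> (\<forall>i<Suc l. th i < th (Suc i)) \<and> th (Suc l) = th 0 + 2*pi
     \<and> th (Suc l) - th l \<noteq> pi
     \<and> (\<forall>i<Suc l. OSec v (th i) (th (Suc i)) \<inter> \<Union>D = {})
     \<and> (\<forall>x. x \<notin> \<Union>D \<longrightarrow> (\<exists>i<Suc l. x \<in> OSec v (th i) (th (Suc i))))"
proof -
  obtain \<omega> where w: "ray v \<omega> \<in> D" and
    w2: "ray v (\<omega> + pi) \<notin> D \<or> (\<exists>t. \<omega> + pi < t \<and> t < \<omega> + 2*pi \<and> ray v t \<in> D)"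
    using wrap_choice[OF assms] by blast
  define \<Theta> where "\<Theta> = {t. \<omega> \<le> t \<and> t < \<omega> + 2*pi \<and> ray v t \<in> D}"
  have inj: "inj_on (ray v) \<Theta>"
    unfolding inj_on_def \<Theta>_def using ray_eq_w by blast
  have img: "ray v ` \<Theta> = D"
  proof
    show "ray v ` \<Theta> \<subseteq> D" unfolding \<Theta>_def by auto
    show "D \<subseteq> ray v ` \<Theta>"
    proof
      fix e assume e: "e \<in> D"
      then obtain \<theta> where th: "e = ray v \<theta>" using rays by blast
      obtain s where s: "\<omega> \<le> s" "s < \<omega> + 2*pi" "ray v s = ray v \<theta>" using rep_ray by blast
      then have "s \<in> \<Theta>" unfolding \<Theta>_def using e th by simp
      then show "e \<in> ray v ` \<Theta>" using s th by auto
    qed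
  qed
  have finT: "finite \<Theta>" using inj img fin finite_imageD by blast
  have cardT: "card \<Theta> = card D" using card_image[OF inj] img by simp
  obtain xs where xs: "sorted_wrt (<) xs" "set xs = \<Theta>" using ex1_sorted_list_for_set_if_finite[OF finT] by blast
  have dist: "distinct xs" using xs(1) strict_sorted_iff by blast
  have len: "length xs = card D" using distinct_card[OF dist] xs(2) cardT by simp
  define l where "l = card D - 1"
  have l: "Suc l = card D" "2 \<le> l" using c3 unfolding l_def by auto
  define th where "th i = (if i < Suc l then xs ! i else \<omega> + 2*pi)" for i
  have xs_in: "xs ! i \<in> \<Theta>" if "i < Suc l" for i using that len l xs(2) nth_mem[of i xs] by simp
  have xs_lt: "xs ! i < xs ! j" if "i < j" "j < Suc l" for i j using sorted_wrt_nth_less[OF xs(1) that(1)] that len l by simp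
  have th0: "th 0 = \<omega>"
  proof -
    have "\<omega> \<in> \<Theta>" unfolding \<Theta>_def using w pi_gt_zero by simp
    then obtain j where j: "j < length xs" "xs ! j = \<omega>" using xs(2) in_set_conv_nth[of \<omega> xs] by auto
    have "xs ! 0 \<le> \<omega>" using xs_lt[of 0 j] j len l by (cases "j = 0") auto
    moreover have "\<omega> \<le> xs ! 0" using xs_in[of 0] unfolding \<Theta>_def by simp
    ultimately show ?thesis unfolding th_def by simp
  qed
  have mono: "\<forall>i<Suc l. th i < th (Suc i)"
  proof (intro allI impI)
    fix i assume i: "i < Suc l"
    show "th i < th (Suc i)"
    proof (cases "Suc i < Suc l")
      case True then show ?thesis unfolding th_def using xs_lt[of i "Suc i"] by simp
    next
      case False
      then have "th (Suc i) = \<omega> + 2*pi" unfolding th_def by simp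
      moreover have "th i < \<omega> + 2*pi" unfolding th_def using i xs_in[of i] unfolding \<Theta>_def by simp
      ultimately show ?thesis by simp
    qed
  qed
  have wrap: "th (Suc l) = th 0 + 2*pi" using th0 unfolding th_def by simp
  have thT: "th i \<in> \<Theta>" if "i < Suc l" for i using xs_in that unfolding th_def by simp
  have Tth: "\<exists>i<Suc l. s = th i" if sT: "s \<in> \<Theta>" for s
  proof -
    obtain i where "i < length xs" "xs ! i = s" using sT xs(2) in_set_conv_nth[of s xs] by auto
    then show ?thesis unfolding th_def using len l by (intro exI[of _ i]) auto
  qed
  have le: "th a \<le> th b" if "a \<le> b" "b \<le> Suc l" for a b using mono_th_le[OF mono that] .
  have lt: "th a < th b" if "a < b" "b \<le> Suc l" for a b using mono_th[OF mono that] .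
  have nopi: "th (Suc l) - th l \<noteq> pi"
  proof
    assume "th (Suc l) - th l = pi"
    then have tl: "th l = \<omega> + pi" using wrap th0 by simp
    have "ray v (\<omega> + pi) \<in> D" using thT[of l] tl unfolding \<Theta>_def by simp
    then obtain t where t: "\<omega> + pi < t" "t < \<omega> + 2*pi" "ray v t \<in> D" using w2 by blast
    then have "t \<in> \<Theta>" unfolding \<Theta>_def by simp
    then obtain i where i: "i < Suc l" "t = th i" using Tth by blast
    have "th i \<le> th l" using le[of i l] i by simp
    then show False using t i tl by simp
  qed
  have disjD: "\<forall>i<Suc l. OSec v (th i) (th (Suc i)) \<inter> \<Union>D = {}"
  proof (intro allI impI)
    fix i assume i: "i < Suc l"
    show "OSec v (th i) (th (Suc i)) \<inter> \<Union>D = {}"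
    proof (rule ccontr)
      assume "\<not> ?thesis"
      then obtain x e where x: "x \<in> OSec v (th i) (th (Suc i))" "x \<in> e" "e \<in> D" by blast
      obtain y where y: "x = v + y" "y = x - v" using split_pt by blast
      have yn: "y \<noteq> 0" using x(1) y(1) v_notin_OSec by auto
      then obtain t where t: "y = norm y *\<^sub>R ee t" "\<omega> \<le> t" "t < \<omega> + 2*pi" using polar by blast
      have b: "\<omega> \<le> th i" "th (Suc i) \<le> \<omega> + 2*pi" using le[of 0 i] le[of "Suc i" "Suc l"] i th0 wrap by auto
      have tin: "th i < t \<and> t < th (Suc i)"
        using memb_OSec_w[OF yn t(1) t(2) t(3), of "th i" "th (Suc i)" v] x(1) b t pi_gt_zero unfolding y(1) by auto
      obtain \<theta> where "e = ray v \<theta>" using rays x(3) by blast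
      then obtain s where s: "\<omega> \<le> s" "s < \<omega> + 2*pi" "e = ray v s" using rep_ray by metis
      then have "t = s" using ray_memb_w[OF yn t(1) t(2) t(3) s(1) s(2), of v] x(2) unfolding y(1) by simp
      moreover have "s \<in> \<Theta>" unfolding \<Theta>_def using s x(3) by simp
      ultimately obtain j where j: "j < Suc l" "t = th j" using Tth by blast
      show False
      proof (cases "j \<le> i")
        case True then show False using le[of j i] tin j i by simp
      next
        case False then show False using le[of "Suc i" j] tin j i by simp
      qed
    qed
  qed
  have cov: "\<forall>x. x \<notin> \<Union>D \<longrightarrow> (\<exists>i<Suc l. x \<in> OSec v (th i) (th (Suc i)))"
  proof (intro allI impI)
    fix x assume xD: "x \<notin> \<Union>D"
    obtain y where y: "x = v + y" "y = x - v" using split_pt by blast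
    have yn: "y \<noteq> 0"
    proof
      assume "y = 0" then have "x = v" using y(1) by simp
      then have "x \<in> ray v \<omega>" by simp
      then show False using xD w by blast
    qed
    then obtain t where t: "y = norm y *\<^sub>R ee t" "\<omega> \<le> t" "t < \<omega> + 2*pi" using polar by blast
    have tn: "t \<noteq> th j" if "j \<le> Suc l" for j
    proof
      assume tj: "t = th j"
      show False
      proof (cases "j = Suc l")
        case True then show False using tj t wrap th0 by simp
      next
        case False
        then have "t \<in> \<Theta>" using thT[of j] that tj by simp
        then have "ray v t \<in> D" unfolding \<Theta>_def by simp
        moreover have "x \<in> ray v t"
        proof -
          have "v + norm y *\<^sub>R ee t \<in> ray v t" by (rule in_rayI) simp
          then show ?thesis unfolding y(1) by (subst t(1))
        qed
        ultimately show False using xD by blast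
      qed
    qed
    obtain i where i: "i < Suc l" "th i \<le> t" "t < th (Suc i)"
      using locate_weak[OF mono, of t] t th0 wrap by auto
    have "th i < t" using i tn[of i] by (simp add: order_le_less)
    then have "x \<in> OSec v (th i) (th (Suc i))" unfolding y(1) OSec_def
      using i yn t(1) by (intro CollectI exI[of _ "norm y"] exI[of _ t]) auto
    then show "\<exists>i<Suc l. x \<in> OSec v (th i) (th (Suc i))" using i by blast
  qed
  show ?thesis using l mono wrap nopi disjD cov by blast
qed

lemma edge_is_ray:
  assumes vf: "v_function v P" and A: "A \<in> P" and e: "e \<in> piece_edges A"
  shows "\<exists>\<theta>. e = ray v \<theta>"
proof -
  have "is_ray e" using vf A e unfolding v_function_def by blast
  then obtain w u where u: "u \<noteq> 0" "e = {w + t *\<^sub>R u | t. 0 \<le> t}" unfolding is_ray_def by blast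
  have "edge_vertex w e" unfolding edge_vertex_def using u by blast
  then have "w \<in> piece_vertices A" unfolding piece_vertices_def edges_vertices_def using e by blast
  then have wv: "w = v" using vf A unfolding v_function_def by blast
  obtain \<theta> where th: "u = norm u *\<^sub>R ee \<theta>" using polar[OF u(1)] by blast
  have nu: "norm u > 0" using u(1) by simp
  have "e = ray v \<theta>"
  proof (rule set_eqI, rule iffI)
    fix x assume "x \<in> e"
    then obtain t where t: "x = v + t *\<^sub>R u" "0 \<le> t" using u(2) wv by blast
    have "x = v + (t * norm u) *\<^sub>R ee \<theta>" unfolding t(1) by (subst th) simp
    then show "x \<in> ray v \<theta>" using in_rayI[of "t * norm u" v \<theta>] t(2) by simp
  next
    fix x assume "x \<in> ray v \<theta>"
    then obtain r where r: "x = v + r *\<^sub>R ee \<theta>" "0 \<le> r" unfolding ray_def by blast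
    have "(r / norm u) *\<^sub>R u = r *\<^sub>R ee \<theta>" using nu by (subst th) simp
    then have "x = w + (r / norm u) *\<^sub>R u" using r(1) wv by simp
    moreover have "0 \<le> r / norm u" using r(2) nu by simp
    ultimately show "x \<in> e" using u(2) by blast
  qed
  then show ?thesis by blast
qed

lemma finite_piece_edges:
  assumes "polygon (fst A) (snd A)"
  shows "finite (piece_edges A)"
proof -
  have "finite (snd A)" using assms by (simp add: polygon_def)
  moreover have "\<forall>C\<in>snd A. finite C"
  proof
    fix C assume C: "C \<in> snd A"
    have "\<forall>C\<in>snd A. polygonal_arc C \<or> polygonal_cycle C" using assms by (simp add: polygon_def)
    then have "polygonal_arc C \<or> polygonal_cycle C" using C by blast
    then show "finite C" unfolding polygonal_arc_def polygonal_cycle_def by blast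
  qed
  ultimately show ?thesis unfolding piece_edges_def by blast
qed

lemma sec_in_piece:
  assumes cover: "\<Union>(fst ` P) = UNIV" and cl: "\<forall>A\<in>P. closed (fst A)"
    and fr: "\<forall>A\<in>P. frontier (fst A) \<subseteq> U"
    and ab: "a < b" "b \<le> a + 2*pi" and dis: "OSec v a b \<inter> U = {}"
  shows "\<exists>A\<in>P. OSec v a b \<subseteq> interior (fst A) \<and> Sec v a b \<subseteq> fst A"
proof -
  define Os where "Os = OSec v a b"
  have x0: "v + ee ((a+b)/2) \<in> Os" unfolding Os_def using OSec_ne ab by simp
  then obtain A where A: "A \<in> P" "v + ee ((a+b)/2) \<in> fst A" using cover by blast
  have "Os \<subseteq> fst A"
  proof (rule ccontr)
    assume "\<not> Os \<subseteq> fst A"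
    then have "Os - fst A \<noteq> {}" by blast
    moreover have "Os \<inter> fst A \<noteq> {}" using x0 A by blast
    ultimately have "Os \<inter> frontier (fst A) \<noteq> {}"
      using connected_Int_frontier[of Os "fst A"] connected_OSec unfolding Os_def by blast
    then show False using fr A dis unfolding Os_def by blast
  qed
  moreover have "open Os" unfolding Os_def using open_OSec ab by simp
  ultimately have I: "Os \<subseteq> interior (fst A)" by (rule interior_maximal)
  have "Sec v a b = closure Os" unfolding Os_def using closure_OSec ab by simp
  also have "\<dots> \<subseteq> fst A" using \<open>Os \<subseteq> fst A\<close> cl A closure_minimal by blast
  finally show ?thesis using I A unfolding Os_def by blast
qed

lemma count_pieces:
  assumes finP: "finite P" and cover: "\<Union>(fst ` P) = UNIV" and cl: "\<forall>A\<in>P. closed (fst A)"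
    and conn: "\<forall>A\<in>P. connected (interior (fst A))"
    and fr: "\<forall>A\<in>P. frontier (fst A) \<subseteq> U" and intU: "\<forall>A\<in>P. interior (fst A) \<inter> U = {}"
    and mono: "\<forall>i<k. th i < th (Suc i)" and wrap: "th k = th 0 + 2*pi"
    and dis: "\<forall>i<k. OSec v (th i) (th (Suc i)) \<inter> U = {}"
    and cov: "\<forall>x. x \<notin> U \<longrightarrow> (\<exists>i<k. x \<in> OSec v (th i) (th (Suc i)))"
  shows "k \<le> card P"
proof -
  define Os where "Os i = OSec v (th i) (th (Suc i))" for i
  have le: "th a \<le> th b" if "a \<le> b" "b \<le> k" for a b using mono_th_le[OF mono that] .
  have ab: "th i < th (Suc i)" "th (Suc i) \<le> th i + 2*pi" if "i < k" for i
    using mono that le[of "Suc i" k] le[of 0 i] wrap by auto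
  have ex: "\<exists>A. A \<in> P \<and> Os i \<subseteq> interior (fst A)" if "i < k" for i
    using sec_in_piece[OF cover cl fr ab[OF that] dis[rule_format, OF that]] unfolding Os_def by blast
  define g where "g i = (SOME A. A \<in> P \<and> Os i \<subseteq> interior (fst A))" for i
  have g: "g i \<in> P" "Os i \<subseteq> interior (fst (g i))" if "i < k" for i
    using someI_ex[OF ex[OF that]] unfolding g_def by blast+
  have opn: "open (Os i)" if "i < k" for i unfolding Os_def using open_OSec ab[OF that] by simp
  have ne: "Os i \<noteq> {}" if "i < k" for i unfolding Os_def using OSec_ne ab[OF that] by blast
  have dsj: "Os i \<inter> Os j = {}" if "i < k" "j < k" "i \<noteq> j" for i j
  proof (cases "i < j")
    case True then show ?thesis unfolding Os_def using OSec_disj[OF mono wrap True that(2)] by simp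
  next
    case False then have "j < i" using that by simp
    then show ?thesis unfolding Os_def using OSec_disj[OF mono wrap _ that(1)] by blast
  qed
  have inj: "inj_on g {..<k}"
  proof (rule inj_onI)
    fix i j assume i: "i \<in> {..<k}" and j: "j \<in> {..<k}" and gij: "g i = g j"
    show "i = j"
    proof (rule ccontr)
      assume ij: "i \<noteq> j"
      define A where "A = g i"
      define I where "I = interior (fst A)"
      have AP: "A \<in> P" unfolding A_def using g i by simp
      have cI: "connected I" unfolding I_def using conn AP by blast
      have Oi: "Os i \<subseteq> I" unfolding I_def A_def using g i by simp
      have Oj: "Os j \<subseteq> I" unfolding I_def A_def using g j gij by simp
      define V where "V = \<Union>(Os ` ({..<k} - {i}))"
      have oV: "open V" unfolding V_def using opn by auto
      have "Os i \<inter> V \<inter> I = {}" unfolding V_def using dsj i by auto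
      moreover have "I \<subseteq> Os i \<union> V"
      proof
        fix x assume x: "x \<in> I"
        then have "x \<notin> U" using intU AP unfolding I_def by blast
        then obtain m where m: "m < k" "x \<in> Os m" using cov unfolding Os_def by blast
        then show "x \<in> Os i \<union> V" unfolding V_def by (cases "m = i") auto
      qed
      ultimately have "Os i \<inter> I = {} \<or> V \<inter> I = {}"
        using connectedD[OF cI opn[of i] oV] i by simp
      moreover have "Os i \<inter> I \<noteq> {}" using Oi ne i by blast
      moreover have "Os j \<subseteq> V" unfolding V_def using j ij by blast
      then have "V \<inter> I \<noteq> {}" using Oj ne j by blast
      ultimately show False by blast
    qed
  qed
  have "card {..<k} \<le> card P" by (rule card_inj_on_le[OF inj _ finP]) (use g in auto)
  then show ?thesis by simp
qed

lemma zero_good: "\<exists>Q. CPA_pieces (\<lambda>x. 0) Q \<and> card Q = 3 \<and> v_function v Q"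
proof -
  have "(2::real) < 0 + 2*pi" using pi_gt3 by simp
  then show ?thesis by (intro realize[of 0 1 2 v "\<lambda>x. 0" 0 0 0 0]) auto
qed

theorem lemma4p2:
  fixes v :: "real^2" and f :: "real^2 \<Rightarrow> real" and p :: nat and \<P> :: "piece set"
  assumes "p \<ge> 3"
    and "CPA_pieces f \<P>" and "card \<P> = p" and "v_function v \<P>"
  shows "\<exists>F :: nat \<Rightarrow> real^2 \<Rightarrow> real.
           (\<forall>n\<in>{1..p-2}. \<exists>\<Q>. CPA_pieces (F n) \<Q> \<and> card \<Q> = 3 \<and> v_function v \<Q>) \<and>
           f = (\<lambda>x. \<Sum>n=1..p-2. F n x)"
proof -
  note cpa = assms(2)
  have finP: "finite \<P>" using cpa unfolding CPA_pieces_def by (elim conjE)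
  have poly: "\<forall>A\<in>\<P>. polygon (fst A) (snd A)" using cpa unfolding CPA_pieces_def by (elim conjE)
  have cover: "\<Union>(fst ` \<P>) = UNIV" using cpa unfolding CPA_pieces_def by (elim conjE)
  have inter: "\<forall>A\<in>\<P>. \<forall>B\<in>\<P>. A \<noteq> B \<longrightarrow> fst A \<inter> fst B = frontier (fst A) \<inter> frontier (fst B)"
    using cpa unfolding CPA_pieces_def by (elim conjE)
  have aff: "\<forall>A\<in>\<P>. \<exists>(a::real^2) (c::real). \<forall>x\<in>fst A. f x = a \<bullet> x + c"
    using cpa unfolding CPA_pieces_def by (elim conjE)
  have cl: "\<forall>A\<in>\<P>. closed (fst A)" using poly by (simp add: polygon_def)
  have conn: "\<forall>A\<in>\<P>. connected (interior (fst A))" using poly by (simp add: polygon_def)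
  have frA: "frontier (fst A) = \<Union>(piece_edges A)" if "A \<in> \<P>" for A
    using poly that unfolding piece_edges_def by (simp add: polygon_def)
  define R where "R = (\<Union>A\<in>\<P>. piece_edges A)"
  have finR: "finite R" unfolding R_def using finP poly finite_piece_edges by blast
  have raysR: "\<forall>e\<in>R. \<exists>\<theta>. e = ray v \<theta>" unfolding R_def using edge_is_ray[OF assms(4)] by blast
  have frR: "\<forall>A\<in>\<P>. frontier (fst A) \<subseteq> \<Union>R" unfolding R_def using frA by blast
  have intR: "\<forall>A\<in>\<P>. interior (fst A) \<inter> \<Union>R = {}"
  proof (intro ballI)
    fix A assume A: "A \<in> \<P>"
    show "interior (fst A) \<inter> \<Union>R = {}"
    proof (rule ccontr)
      assume "\<not> ?thesis"
      then obtain x B where x: "x \<in> interior (fst A)" "B \<in> \<P>" "x \<in> \<Union>(piece_edges B)" unfolding R_def by blast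
      then have xB: "x \<in> frontier (fst B)" using frA by blast
      show False
      proof (cases "A = B")
        case True then show False using x xB unfolding frontier_def by blast
      next
        case False
        have "x \<in> fst B" using xB cl x(2) frontier_subset_closed by blast
        moreover have "x \<in> fst A" using x(1) interior_subset by blast
        ultimately have "x \<in> frontier (fst A)" using inter A x(2) False by blast
        then show False using x(1) unfolding frontier_def by blast
      qed
    qed
  qed
  have Dex: "\<exists>D. finite D \<and> (\<forall>e\<in>D. \<exists>\<theta>. e = ray v \<theta>) \<and> R \<subseteq> D \<and> 3 \<le> card D \<and> card D \<le> p"
  proof (cases "3 \<le> card R")
    case True
    obtain l th where F: "2 \<le> l" "Suc l = card R" "\<forall>i<Suc l. th i < th (Suc i)" "th (Suc l) = th 0 + 2*pi"
      "\<forall>i<Suc l. OSec v (th i) (th (Suc i)) \<inter> \<Union>R = {}"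
      "\<forall>x. x \<notin> \<Union>R \<longrightarrow> (\<exists>i<Suc l. x \<in> OSec v (th i) (th (Suc i)))"
      using fan_exists[OF finR raysR True] by blast
    have "Suc l \<le> card \<P>" by (rule count_pieces[OF finP cover cl conn frR intR F(3,4,5,6)])
    then show ?thesis using finR raysR True F(2) assms(3) by (intro exI[of _ R]) auto
  next
    case False
    define X where "X = {ray v 0, ray v 1, ray v 2}"
    have p1: "(1::real) < 2*pi" "(2::real) < 2*pi" "(2::real) < 1 + 2*pi" using pi_gt3 by auto
    have "ray v 0 \<noteq> ray v 1" by (rule ray_neq, rule ee_neq) (use p1 in auto)
    moreover have "ray v 0 \<noteq> ray v 2" by (rule ray_neq, rule ee_neq) (use p1 in auto)
    moreover have "ray v 1 \<noteq> ray v 2" by (rule ray_neq, rule ee_neq) (use p1 in auto)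
    ultimately have cX: "card X = 3" unfolding X_def by simp
    have "card X - card R \<le> card (X - R)" using finR by (rule diff_card_le_card_Diff)
    then have "3 - card R \<le> card (X - R)" using cX by simp
    then obtain T where T: "T \<subseteq> X - R" "card T = 3 - card R" "finite T"
      by (rule obtain_subset_with_card_n)
    define D where "D = R \<union> T"
    have "R \<inter> T = {}" using T by blast
    then have cD: "card D = 3" unfolding D_def using card_Un_disjoint[OF finR T(3)] T False by simp
    have "\<forall>e\<in>D. \<exists>\<theta>. e = ray v \<theta>" unfolding D_def using raysR T(1) unfolding X_def by blast
    then show ?thesis using cD finR T(3) assms(1) unfolding D_def by (intro exI[of _ "R \<union> T"]) auto
  qed
  then obtain D where D: "finite D" "\<forall>e\<in>D. \<exists>\<theta>. e = ray v \<theta>" "R \<subseteq> D" "3 \<le> card D" "card D \<le> p"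
    by blast
  obtain l th where F: "2 \<le> l" "Suc l = card D" "\<forall>i<Suc l. th i < th (Suc i)" "th (Suc l) = th 0 + 2*pi"
      "th (Suc l) - th l \<noteq> pi"
      "\<forall>i<Suc l. OSec v (th i) (th (Suc i)) \<inter> \<Union>D = {}"
    using fan_exists[OF D(1,2,4)] by blast
  have le: "th a \<le> th b" if "a \<le> b" "b \<le> Suc l" for a b using mono_th_le[OF F(3) that] .
  have secaff: "\<exists>b. \<forall>x\<in>Sec v (th i) (th (Suc i)). f x = f v + b \<bullet> (x - v)" if i: "i < Suc l" for i
  proof -
    have ab: "th i < th (Suc i)" "th (Suc i) \<le> th i + 2*pi"
      using F(3,4) i le[of "Suc i" "Suc l"] le[of 0 i] by auto
    have "OSec v (th i) (th (Suc i)) \<inter> \<Union>R = {}" using F(6) i D(3) by blast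
    then obtain A where A: "A \<in> \<P>" "Sec v (th i) (th (Suc i)) \<subseteq> fst A"
      using sec_in_piece[OF cover cl frR ab] by blast
    obtain a c where ac: "\<forall>x\<in>fst A. f x = a \<bullet> x + c" using aff A(1) by blast
    have "v \<in> fst A" using A(2) v_in_Sec[of "th i" "th (Suc i)" v] ab by auto
    then have fv: "f v = a \<bullet> v + c" using ac by blast
    have "\<forall>x\<in>Sec v (th i) (th (Suc i)). f x = f v + a \<bullet> (x - v)"
      using ac A(2) fv by (auto simp: inner_diff_right)
    then show ?thesis by blast
  qed
  have "\<forall>i. \<exists>b. i < Suc l \<longrightarrow> (\<forall>x\<in>Sec v (th i) (th (Suc i)). f x = f v + b \<bullet> (x - v))"
    using secaff by blast
  then obtain a where a: "\<forall>i. i < Suc l \<longrightarrow> (\<forall>x\<in>Sec v (th i) (th (Suc i)). f x = f v + a i \<bullet> (x - v))"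
    by (metis choice)
  have fa: "\<forall>i<Suc l. \<forall>x\<in>Sec v (th i) (th (Suc i)). f x = f v + a i \<bullet> (x - v)" using a by blast
  obtain F0 where F0: "\<forall>n\<in>{1..l-1}. \<exists>Q. CPA_pieces (F0 n) Q \<and> card Q = 3 \<and> v_function v Q"
    "f = (\<lambda>x. \<Sum>n=1..l-1. F0 n x)"
    using decompose[OF F(1,3,4,5) fa] by blast
  define G where "G n = (if n \<le> l - 1 then F0 n else (\<lambda>x. 0))" for n
  have lp: "l - 1 \<le> p - 2" using F(2) D(5) by simp
  have good: "\<forall>n\<in>{1..p-2}. \<exists>Q. CPA_pieces (G n) Q \<and> card Q = 3 \<and> v_function v Q"
  proof
    fix n assume n: "n \<in> {1..p-2}"
    show "\<exists>Q. CPA_pieces (G n) Q \<and> card Q = 3 \<and> v_function v Q"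
    proof (cases "n \<le> l - 1")
      case True then show ?thesis unfolding G_def using F0(1) n by simp
    next
      case False then show ?thesis unfolding G_def using zero_good by simp
    qed
  qed
  have sums: "f = (\<lambda>x. \<Sum>n=1..p-2. G n x)"
  proof
    fix x
    have "(\<Sum>n=1..p-2. G n x) = (\<Sum>n=1..p-2. (if n \<le> l - 1 then F0 n x else 0))"
      unfolding G_def by (intro sum.cong) auto
    also have "\<dots> = (\<Sum>n\<in>{n\<in>{1..p-2}. n \<le> l - 1}. F0 n x)"
      by (rule sum.inter_filter[symmetric]) simp
    also have "{n\<in>{1..p-2}. n \<le> l - 1} = {1..l-1}" using lp by auto
    finally show "f x = (\<Sum>n=1..p-2. G n x)" using F0(2) by simp
  qed
  show ?thesis using good sums by blast
qed

end
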